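(* Let $Y$ be a CARMA$(p,q)$ process with $p\le 3$, such that $\Re(\lambda_j)<0$ and $\Re(\mu_k)\ne0$ for all $j,k$ and the zeroes $\lambda_1,\dots,\lambda_p$ of $a$ are distinct, and let $\tilde Y^{\Delta,h}_n=\sum_{j=0}^\infty g(\Delta(j+h))\Delta L_{n-j}$ be its approximating Riemann sum with rule $h$. If $p=1$, then $\tilde Y^{\Delta,h}$ is an AR$(1)$ process $(1-e^{\Delta\lambda_1}B)\tilde Y^{\Delta,h}_n=Z^\Delta_n$ driven by $Z^\Delta_n=\sigma e^{\Delta h\lambda_1}\Delta L_n$. If $p\in\{2,3\}$ and $h\in(0,1)$, then as $\Delta\downarrow0$ $$\Phi_\Delta(B)\tilde Y^{\Delta,h}_n=\tilde\theta_0^{\Delta,h}\prod_{i=1}^q\big(1-(1-\Delta\mu_i+o(\Delta))B\big)\prod_{i=1}^{p-q-1}\big(1-\chi_{p-q,i}(h)B\big)\Delta L_n,\qquad \tilde\theta_0^{\Delta,h}=\sigma\frac{(h\Delta)^{p-q-1}}{(p-q-1)!}(1+o(1)),$$ where $$\chi_{2,1}(h)=\frac{h-1}{h}+o(1),\qquad \chi_{3,j}(h)=\frac{2(h-1)^2}{2(h-1)h-1-(-1)^j\sqrt{1-4(h-1)h}}+o(1),\quad j=1,2.$$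
   Context: $L$ is a two-sided Lévy process with $\mathbb{E}L_1=0$, $\mathbb{E}L_1^2=1$, and $\Delta L_n:=L_{n\Delta}-L_{(n-1)\Delta}$. CARMA setting: $p>q\ge0$ integers, $\sigma>0$, $a(z)=\prod_{i=1}^p(z-\lambda_i)$ monic of degree $p$ and $b(z)=\prod_{i=1}^q(z+\mu_i)$, both with real coefficients and no common zeroes; the kernel is $g(t)=\sigma\sum_\lambda\mathrm{Res}_{z=\lambda}(e^{zt}b(z)/a(z))$ for $t>0$ and $g(t)=0$ for $t\le0$ (sum over distinct zeroes of $a$). $\Phi_\Delta(z)=\prod_{i=1}^p(1-e^{\Delta\lambda_i}z)$ and $B$ is the backshift operator. The displayed identity is understood with the coefficients of the moving average polynomial given by their asymptotic expressions as $\Delta\downarrow0$. *)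

theory Defs
  imports "HOL-Complex_Analysis.Complex_Analysis" "HOL-Computational_Algebra.Polynomial"
begin

definition carma_a :: "(nat \<Rightarrow> complex) \<Rightarrow> nat \<Rightarrow> complex poly" where
  "carma_a lam p = (\<Prod>i<p. [:- lam i, 1:])"

definition carma_b :: "(nat \<Rightarrow> complex) \<Rightarrow> nat \<Rightarrow> complex poly" where
  "carma_b mu q = (\<Prod>i<q. [:mu i, 1:])"

definition carma_kernel :: "real \<Rightarrow> complex poly \<Rightarrow> complex poly \<Rightarrow> real \<Rightarrow> complex" where
  "carma_kernel \<sigma> a b t =
     (if t > 0 then of_real \<sigma> * (\<Sum>z\<in>{z. poly a z = 0}.
        residue (\<lambda>w. exp (w * of_real t) * poly b w / poly a w) z) else 0)"

definition Phi_Delta :: "(nat \<Rightarrow> complex) \<Rightarrow> nat \<Rightarrow> real \<Rightarrow> complex poly" where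
  "Phi_Delta lam p \<Delta> = (\<Prod>i<p. [:1, - exp (of_real \<Delta> * lam i):])"

definition poly_B :: "complex poly \<Rightarrow> (int \<Rightarrow> complex) \<Rightarrow> int \<Rightarrow> complex" where
  "poly_B P Y n = (\<Sum>k\<le>degree P. coeff P k * Y (n - int k))"

text \<open>Riemann sum approximation with rule h, driven by the increment sequence dL
  (dL n plays the role of Delta L_n = L_{n Delta} - L_{(n-1) Delta}).\<close>
definition riemann_sum ::
  "(real \<Rightarrow> complex) \<Rightarrow> real \<Rightarrow> real \<Rightarrow> (int \<Rightarrow> real) \<Rightarrow> int \<Rightarrow> complex" where
  "riemann_sum g \<Delta> h dL n = (\<Sum>j. g (\<Delta> * (real j + h)) * of_real (dL (n - int j)))"

definition riemann_summable ::
  "(real \<Rightarrow> complex) \<Rightarrow> real \<Rightarrow> real \<Rightarrow> (int \<Rightarrow> real) \<Rightarrow> bool" where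
  "riemann_summable g \<Delta> h dL =
     (\<forall>n. summable (\<lambda>j. g (\<Delta> * (real j + h)) * of_real (dL (n - int j))))"

text \<open>The limiting MA zeroes chi_{m,j}(h) (j starting at 1).\<close>
definition chi :: "nat \<Rightarrow> nat \<Rightarrow> real \<Rightarrow> real" where
  "chi m j h =
     (if m = 2 then (h - 1) / h
      else 2 * (h - 1)^2 / (2 * (h - 1) * h - 1 - (-1)^j * sqrt (1 - 4 * (h - 1) * h)))"

end

theory Submission
  imports Defs
begin


definition Tm :: "nat \<Rightarrow> complex \<Rightarrow> complex" where
  "Tm m x = (\<Sum>n<m. x ^ n / fact n)"

definition Em :: "nat \<Rightarrow> complex \<Rightarrow> complex" where
  "Em m x = (if x = 0 then 1 / fact m else (exp x - Tm m x) / x ^ m)"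

lemma Em_sums:
  assumes "x \<noteq> 0"
  shows "(\<lambda>k. (1 / fact (k + m)) * x ^ k) sums Em m x"
proof -
  have "(\<lambda>n. x ^ n /\<^sub>R fact n) sums exp x" by (rule exp_converges)
  hence "(\<lambda>n. x ^ n / fact n) sums exp x" by (simp add: scaleR_conv_of_real divide_inverse mult.commute)
  hence "(\<lambda>i. x ^ (i + m) / fact (i + m)) sums (exp x - (\<Sum>i<m. x ^ i / fact i))"
    using sums_iff_shift[of "\<lambda>n. x ^ n / fact n" m "exp x - (\<Sum>i<m. x ^ i / fact i)"] by simp
  hence "(\<lambda>i. (x ^ (i + m) / fact (i + m)) / x ^ m) sums ((exp x - (\<Sum>i<m. x ^ i / fact i)) / x ^ m)"
    by (rule sums_divide)
  moreover have "\<And>i. (x ^ (i + m) / fact (i + m)) / x ^ m = (1 / fact (i + m)) * x ^ i"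
    using assms by (simp add: power_add field_simps)
  ultimately show ?thesis using assms by (simp add: Em_def Tm_def)
qed

lemma Em_cont: "isCont (Em m) 0"
proof -
  have "(Em m \<longlongrightarrow> 1 / fact (0 + m)) (at 0)"
    apply (rule powser_limit_0_strong[of 1])
    using Em_sums by auto
  thus ?thesis by (simp add: isCont_def Em_def)
qed

lemma Tm_zero: "m > 0 \<Longrightarrow> Tm m 0 = 1"
  unfolding Tm_def by (induction m) (auto simp: power_0_left)

lemma single_term:
  fixes \<kappa> c :: complex
  shows "((\<lambda>\<Delta>::real. (c * exp (\<kappa> * of_real \<Delta>) - (\<Sum>n<m. c * \<kappa> ^ n * of_real \<Delta> ^ n / fact n)) / of_real \<Delta> ^ m)
          \<longlongrightarrow> c * \<kappa> ^ m / fact m) (at_right 0)"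
proof -
  have eq: "(c * exp (\<kappa> * of_real \<Delta>) - (\<Sum>n<m. c * \<kappa> ^ n * of_real \<Delta> ^ n / fact n)) / of_real \<Delta> ^ m
      = c * \<kappa> ^ m * Em m (\<kappa> * of_real \<Delta>)" if "\<Delta> > 0" for \<Delta> :: real
  proof -
    have s: "(\<Sum>n<m. c * \<kappa> ^ n * of_real \<Delta> ^ n / fact n) = c * Tm m (\<kappa> * of_real \<Delta>)"
      by (simp add: Tm_def sum_distrib_left power_mult_distrib mult.assoc)
    show ?thesis
    proof (cases "\<kappa> = 0")
      case True
      then show ?thesis unfolding s using that by (cases "m = 0") (auto simp: Em_def Tm_zero, simp add: Tm_def)
    next
      case False
      then show ?thesis unfolding s using that by (simp add: Em_def field_simps power_mult_distrib)
    qed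
  qed
  have "((\<lambda>\<Delta>::real. \<kappa> * of_real \<Delta>) \<longlongrightarrow> \<kappa> * of_real 0) (at_right 0)"
    by (intro tendsto_intros)
  hence "((\<lambda>\<Delta>::real. Em m (\<kappa> * of_real \<Delta>)) \<longlongrightarrow> Em m 0) (at_right 0)"
    using isCont_tendsto_compose[OF Em_cont] by simp
  hence "((\<lambda>\<Delta>::real. c * \<kappa> ^ m * Em m (\<kappa> * of_real \<Delta>)) \<longlongrightarrow> c * \<kappa> ^ m * Em m 0) (at_right 0)"
    by (rule tendsto_mult_left)
  hence "((\<lambda>\<Delta>::real. c * \<kappa> ^ m * Em m (\<kappa> * of_real \<Delta>)) \<longlongrightarrow> c * \<kappa> ^ m * (1 / fact m)) (at_right 0)"
    by (simp add: Em_def)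
  hence "((\<lambda>\<Delta>::real. c * \<kappa> ^ m * Em m (\<kappa> * of_real \<Delta>)) \<longlongrightarrow> c * \<kappa> ^ m / fact m) (at_right 0)"
    by simp
  moreover have "eventually (\<lambda>\<Delta>. c * \<kappa> ^ m * Em m (\<kappa> * of_real \<Delta>) = (c * exp (\<kappa> * of_real \<Delta>) - (\<Sum>n<m. c * \<kappa> ^ n * of_real \<Delta> ^ n / fact n)) / of_real \<Delta> ^ m) (at_right (0::real))"
    using eq eventually_at_right_less by (metis (mono_tags, lifting) eventually_mono)
  ultimately show ?thesis by (rule tendsto_cong[THEN iffD1, rotated])
qed

definition es :: "(complex \<times> complex) list \<Rightarrow> real \<Rightarrow> complex" where
  "es xs \<Delta> = (\<Sum>(c,k)\<leftarrow>xs. c * exp (k * of_real \<Delta>))"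
definition mom :: "(complex \<times> complex) list \<Rightarrow> nat \<Rightarrow> complex" where
  "mom xs n = (\<Sum>(c,k)\<leftarrow>xs. c * k ^ n)"

lemma es_general:
  "((\<lambda>\<Delta>::real. (es xs \<Delta> - (\<Sum>n<m. mom xs n * of_real \<Delta> ^ n / fact n)) / of_real \<Delta> ^ m)
          \<longlongrightarrow> mom xs m / fact m) (at_right 0)"
proof (induction xs)
  case Nil
  then show ?case by (simp add: es_def mom_def)
next
  case (Cons a xs)
  obtain c k where a: "a = (c, k)" by force
  have "((\<lambda>\<Delta>::real. (c * exp (k * of_real \<Delta>) - (\<Sum>n<m. c * k ^ n * of_real \<Delta> ^ n / fact n)) / of_real \<Delta> ^ m
     + (es xs \<Delta> - (\<Sum>n<m. mom xs n * of_real \<Delta> ^ n / fact n)) / of_real \<Delta> ^ m)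
          \<longlongrightarrow> c * k ^ m / fact m + mom xs m / fact m) (at_right 0)"
    by (intro tendsto_add single_term Cons.IH)
  moreover have "(c * exp (k * of_real \<Delta>) - (\<Sum>n<m. c * k ^ n * of_real \<Delta> ^ n / fact n)) / of_real \<Delta> ^ m
     + (es xs \<Delta> - (\<Sum>n<m. mom xs n * of_real \<Delta> ^ n / fact n)) / of_real \<Delta> ^ m
     = (es (a # xs) \<Delta> - (\<Sum>n<m. mom (a # xs) n * of_real \<Delta> ^ n / fact n)) / of_real \<Delta> ^ m" for \<Delta>
    by (simp add: a es_def mom_def add_divide_distrib[symmetric] sum.distrib[symmetric] algebra_simps)
  moreover have "c * k ^ m / fact m + mom xs m / fact m = mom (a # xs) m / fact m"
    by (simp add: a mom_def add_divide_distrib)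
  ultimately show ?case by simp
qed

lemma es_limit:
  assumes "\<And>n. n < m \<Longrightarrow> mom xs n = 0"
  shows "((\<lambda>\<Delta>::real. es xs \<Delta> / of_real \<Delta> ^ m) \<longlongrightarrow> mom xs m / fact m) (at_right 0)"
  using es_general[of xs m] assms by simp

definition lmul :: "(complex \<times> complex) list \<Rightarrow> (complex \<times> complex) list \<Rightarrow> (complex \<times> complex) list" where
  "lmul xs ys = concat (map (\<lambda>(c,k). map (\<lambda>(d,l). (c*d, k+l)) ys) xs)"

lemma es_Nil[simp]: "es [] \<Delta> = 0" by (simp add: es_def)
lemma es_Cons[simp]: "es ((c,k) # xs) \<Delta> = c * exp (k * of_real \<Delta>) + es xs \<Delta>" by (simp add: es_def)
lemma es_append[simp]: "es (xs @ ys) \<Delta> = es xs \<Delta> + es ys \<Delta>" by (simp add: es_def)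
lemma es_lmul[simp]: "es (lmul xs ys) \<Delta> = es xs \<Delta> * es ys \<Delta>"
proof (induction xs)
  case Nil then show ?case by (simp add: lmul_def)
next
  case (Cons a xs)
  obtain c k where a: "a = (c, k)" by force
  have "es (map (\<lambda>(d,l). (c*d, k+l)) ys) \<Delta> = c * exp (k * of_real \<Delta>) * es ys \<Delta>"
    by (induction ys) (auto simp: distrib_right exp_add algebra_simps)
  with Cons show ?case by (simp add: a lmul_def distrib_right)
qed



lemma poly_carma_a: "poly (carma_a lam p) z = (\<Prod>i<p. z - lam i)"
  by (simp add: carma_a_def poly_prod)

lemma kernel_formula:
  assumes inj: "inj_on lam {..<p}" and t: "t > 0"
  shows "carma_kernel \<sigma> (carma_a lam p) b t =
    of_real \<sigma> * (\<Sum>i<p. poly b (lam i) / (\<Prod>k\<in>{..<p}-{i}. (lam i - lam k)) * exp (lam i * of_real t))"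
proof -
  have Z: "{z. poly (carma_a lam p) z = 0} = lam ` {..<p}"
    by (auto simp: poly_carma_a)
  have res: "residue (\<lambda>w. exp (w * of_real t) * poly b w / poly (carma_a lam p) w) (lam i)
      = poly b (lam i) / (\<Prod>k\<in>{..<p}-{i}. (lam i - lam k)) * exp (lam i * of_real t)"
    if i: "i < p" for i
  proof -
    define Q where "Q w = (\<Prod>k\<in>{..<p}-{i}. (w - lam k))" for w
    define S where "S = - (lam ` ({..<p}-{i}))"
    have "poly (carma_a lam p) w = (w - lam i) * Q w" for w
      unfolding poly_carma_a Q_def using i by (subst prod.remove[of _ i]) auto
    hence f: "(\<lambda>w. exp (w * of_real t) * poly b w / poly (carma_a lam p) w)
        = (\<lambda>w. (exp (w * of_real t) * poly b w / Q w) / (w - lam i))"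
      by (auto simp: divide_divide_eq_left mult.commute)
    have oS: "open S" unfolding S_def by (intro open_Compl finite_imp_closed) auto
    have iS: "lam i \<in> S" unfolding S_def using inj i by (auto simp: inj_on_def)
    have Qnz: "Q w \<noteq> 0" if "w \<in> S" for w
      using that unfolding Q_def S_def by auto
    have hol: "(\<lambda>w. exp (w * of_real t) * poly b w / Q w) holomorphic_on S"
      unfolding Q_def using Qnz[unfolded Q_def]
      by (intro holomorphic_intros) auto
    show ?thesis by (simp only: f residue_simple[OF oS iS hol]) (simp add: Q_def)
  qed
  show ?thesis
    unfolding carma_kernel_def using t
    by (simp add: Z sum.reindex[OF inj] res)
qed

lemma poly_B_bound:
  assumes "degree P < N"
  shows "poly_B P Y n = (\<Sum>k<N. coeff P k * Y (n - int k))"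
  unfolding poly_B_def using assms
  by (intro sum.mono_neutral_left) (auto simp: coeff_eq_0)

lemma degree_Phi: "degree (Phi_Delta lam p \<Delta>) = p"
  unfolding Phi_Delta_def by (subst degree_prod_eq_sum_degree) auto

lemma poly_Phi: "poly (Phi_Delta lam p \<Delta>) x = (\<Prod>i<p. 1 - exp (of_real \<Delta> * lam i) * x)"
  unfolding Phi_Delta_def by (simp add: poly_prod mult.commute)

lemma recurrence:
  fixes g :: "real \<Rightarrow> complex"
  assumes gform: "\<And>t. t > 0 \<Longrightarrow> g t = (\<Sum>i<p. B i * exp (lam i * of_real t))"
  and D: "\<Delta> > 0" and h: "h > 0" and j: "j \<ge> p"
  shows "(\<Sum>k\<le>p. coeff (Phi_Delta lam p \<Delta>) k * g (\<Delta> * (real (j - k) + h))) = 0"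
proof -
  define \<rho> where "\<rho> i = exp (of_real \<Delta> * lam i)" for i
  have \<rho>nz: "\<rho> i \<noteq> 0" for i by (simp add: \<rho>_def)
  have gk: "g (\<Delta> * (real (j - k) + h)) = (\<Sum>i<p. B i * exp (lam i * of_real (\<Delta> * h)) * \<rho> i ^ (j - k))"
    if "k \<le> p" for k
  proof -
    have "\<Delta> * (real (j - k) + h) > 0" using D h by simp
    hence "g (\<Delta> * (real (j - k) + h)) = (\<Sum>i<p. B i * exp (lam i * of_real (\<Delta> * (real (j - k) + h))))"
      by (rule gform)
    also have "\<dots> = (\<Sum>i<p. B i * exp (lam i * of_real (\<Delta> * h)) * \<rho> i ^ (j - k))"
    proof (rule sum.cong[OF refl])
      fix i
      have "lam i * of_real (\<Delta> * (real (j - k) + h)) = of_nat (j - k) * (of_real \<Delta> * lam i) + lam i * of_real (\<Delta> * h)"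
        by (simp add: algebra_simps)
      thus "B i * exp (lam i * of_real (\<Delta> * (real (j - k) + h))) = B i * exp (lam i * of_real (\<Delta> * h)) * \<rho> i ^ (j - k)"
        by (simp add: exp_add exp_of_nat_mult \<rho>_def)
    qed
    finally show ?thesis .
  qed
  have inner: "(\<Sum>k\<le>p. coeff (Phi_Delta lam p \<Delta>) k * \<rho> i ^ (j - k)) = 0" if i: "i < p" for i
  proof -
    have "(\<Sum>k\<le>p. coeff (Phi_Delta lam p \<Delta>) k * \<rho> i ^ (j - k))
        = \<rho> i ^ j * (\<Sum>k\<le>p. coeff (Phi_Delta lam p \<Delta>) k * inverse (\<rho> i) ^ k)"
      unfolding sum_distrib_left
    proof (rule sum.cong[OF refl])
      fix k assume "k \<in> {..p}"
      hence "k \<le> j" using j by simp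
      thus "coeff (Phi_Delta lam p \<Delta>) k * \<rho> i ^ (j - k) = \<rho> i ^ j * (coeff (Phi_Delta lam p \<Delta>) k * inverse (\<rho> i) ^ k)"
        using \<rho>nz[of i] by (simp add: power_diff power_inverse field_simps)
    qed
    also have "(\<Sum>k\<le>p. coeff (Phi_Delta lam p \<Delta>) k * inverse (\<rho> i) ^ k) = poly (Phi_Delta lam p \<Delta>) (inverse (\<rho> i))"
      by (simp add: poly_altdef degree_Phi)
    also have "\<dots> = 0" unfolding poly_Phi using i \<rho>nz[of i]
      by (auto simp: \<rho>_def[symmetric] intro!: bexI[of _ i])
    finally show ?thesis by simp
  qed
  have "(\<Sum>k\<le>p. coeff (Phi_Delta lam p \<Delta>) k * g (\<Delta> * (real (j - k) + h)))
      = (\<Sum>k\<le>p. \<Sum>i<p. B i * exp (lam i * of_real (\<Delta> * h)) * (coeff (Phi_Delta lam p \<Delta>) k * \<rho> i ^ (j - k)))"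
    by (intro sum.cong refl) (simp only: gk atMost_iff sum_distrib_left, simp add: algebra_simps)
  also have "\<dots> = (\<Sum>i<p. B i * exp (lam i * of_real (\<Delta> * h)) * (\<Sum>k\<le>p. coeff (Phi_Delta lam p \<Delta>) k * \<rho> i ^ (j - k)))"
    by (subst sum.swap) (simp add: sum_distrib_left)
  also have "\<dots> = 0" by (simp add: inner)
  finally show ?thesis .
qed



lemma sums_shift_right:
  fixes f :: "nat \<Rightarrow> complex"
  assumes "f sums s"
  shows "(\<lambda>j. if k \<le> j then f (j - k) else 0) sums s"
proof -
  let ?f = "\<lambda>j. if k \<le> j then f (j - k) else 0"
  have "(\<lambda>i. ?f (i + k)) = f" by auto
  hence "(\<lambda>i. ?f (i + k)) sums s" using assms by simp
  hence "?f sums (s + (\<Sum>i<k. ?f i))" using sums_iff_shift[of ?f k s] by blast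
  thus ?thesis by simp
qed

lemma struct:
  fixes g :: "real \<Rightarrow> complex"
  assumes gform: "\<And>t. t > 0 \<Longrightarrow> g t = (\<Sum>i<p. B i * exp (lam i * of_real t))"
  and D: "\<Delta> > 0" and h: "h > 0" and summ: "riemann_summable g \<Delta> h dL"
  shows "poly_B (Phi_Delta lam p \<Delta>) (riemann_sum g \<Delta> h dL) n =
    (\<Sum>j<p. (\<Sum>k\<le>j. coeff (Phi_Delta lam p \<Delta>) k * g (\<Delta> * (real (j - k) + h))) * of_real (dL (n - int j)))"
proof -
  define \<phi> where "\<phi> k = coeff (Phi_Delta lam p \<Delta>) k" for k
  define gg where "gg m = g (\<Delta> * (real m + h))" for m
  define G where "G k j = (if k \<le> j then gg (j - k) * of_real (dL (n - int j)) else 0)" for k j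
  have Gs: "G k sums riemann_sum g \<Delta> h dL (n - int k)" for k
  proof -
    have "(\<lambda>j. gg j * of_real (dL (n - int k - int j))) sums riemann_sum g \<Delta> h dL (n - int k)"
      using summ unfolding riemann_summable_def riemann_sum_def gg_def
      by (simp add: summable_sums)
    from sums_shift_right[OF this, of k]
    show ?thesis unfolding G_def
      by (rule back_subst[where P="\<lambda>f. f sums _"]) (auto simp: of_nat_diff)
  qed
  have "(\<lambda>j. \<Sum>k\<le>p. \<phi> k * G k j) sums (\<Sum>k\<le>p. \<phi> k * riemann_sum g \<Delta> h dL (n - int k))"
    by (intro sums_sum sums_mult Gs)
  moreover have "(\<lambda>j. \<Sum>k\<le>p. \<phi> k * G k j) sums (\<Sum>j<p. \<Sum>k\<le>p. \<phi> k * G k j)"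
  proof (rule sums_finite)
    fix j assume "j \<notin> {..<p}"
    hence j: "j \<ge> p" by simp
    have "(\<Sum>k\<le>p. \<phi> k * G k j) = (\<Sum>k\<le>p. \<phi> k * gg (j - k)) * of_real (dL (n - int j))"
      unfolding sum_distrib_right G_def using j by (intro sum.cong) auto
    also have "(\<Sum>k\<le>p. \<phi> k * gg (j - k)) = 0"
      unfolding \<phi>_def gg_def using recurrence[OF gform D h j] by simp
    finally show "(\<Sum>k\<le>p. \<phi> k * G k j) = 0" by simp
  qed simp
  ultimately have "(\<Sum>k\<le>p. \<phi> k * riemann_sum g \<Delta> h dL (n - int k)) = (\<Sum>j<p. \<Sum>k\<le>p. \<phi> k * G k j)"
    using sums_unique2 by blast
  also have "\<dots> = (\<Sum>j<p. (\<Sum>k\<le>j. \<phi> k * gg (j - k)) * of_real (dL (n - int j)))"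
  proof (rule sum.cong[OF refl])
    fix j assume "j \<in> {..<p}"
    hence "{..j} \<subseteq> {..p}" by auto
    have "(\<Sum>k\<le>p. \<phi> k * G k j) = (\<Sum>k\<le>j. \<phi> k * G k j)"
      using \<open>{..j} \<subseteq> {..p}\<close> by (intro sum.mono_neutral_right) (auto simp: G_def)
    also have "\<dots> = (\<Sum>k\<le>j. \<phi> k * gg (j - k)) * of_real (dL (n - int j))"
      unfolding sum_distrib_right G_def by (intro sum.cong) auto
    finally show "(\<Sum>k\<le>p. \<phi> k * G k j) = (\<Sum>k\<le>j. \<phi> k * gg (j - k)) * of_real (dL (n - int j))" .
  qed
  finally show ?thesis
    unfolding poly_B_def degree_Phi \<phi>_def gg_def by simp
qed



lemma quad_roots:
  fixes S P :: "'a \<Rightarrow> complex" and c1 c2 :: complex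
  assumes S: "(S \<longlongrightarrow> c1 + c2) F" and P: "(P \<longlongrightarrow> c1 * c2) F"
  shows "\<exists>x1 x2. (\<forall>z. x1 z + x2 z = S z \<and> x1 z * x2 z = P z) \<and> (x1 \<longlongrightarrow> c1) F \<and> (x2 \<longlongrightarrow> c2) F"
proof -
  define D where "D = c1 - c2"
  define w where "w z = csqrt (S z ^ 2 - 4 * P z)" for z
  define w' where "w' z = (if cmod (w z - D) \<le> cmod (w z + D) then w z else - w z)" for z
  have w'sq: "w' z ^ 2 = S z ^ 2 - 4 * P z" for z
    by (simp add: w'_def w_def)
  have le: "cmod (w' z - D) \<le> cmod (w' z + D)" for z
  proof (cases "cmod (w z - D) \<le> cmod (w z + D)")
    case True thus ?thesis by (simp add: w'_def)
  next
    case False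
    have "- w z - D = - (w z + D)" by simp
    hence "cmod (- w z - D) = cmod (w z + D)" by (simp only: norm_minus_cancel)
    moreover have "- w z + D = - (w z - D)" by simp
    hence "cmod (- w z + D) = cmod (w z - D)" by (simp only: norm_minus_cancel)
    moreover have "w' z = - w z" using False by (simp add: w'_def)
    ultimately show ?thesis using False by simp
  qed
  have bound: "cmod (w' z - D) \<le> sqrt (cmod (S z ^ 2 - 4 * P z - D ^ 2))" for z
  proof -
    have "cmod (w' z - D) ^ 2 \<le> cmod (w' z - D) * cmod (w' z + D)"
      using mult_left_mono[OF le[of z] norm_ge_zero] by (simp add: power2_eq_square)
    also have "\<dots> = cmod ((w' z - D) * (w' z + D))"
      by (simp add: norm_mult)
    also have "(w' z - D) * (w' z + D) = w' z ^ 2 - D ^ 2"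
      by (simp add: power2_eq_square algebra_simps)
    also have "w' z ^ 2 - D ^ 2 = S z ^ 2 - 4 * P z - D ^ 2" by (simp add: w'sq)
    finally show ?thesis by (rule real_le_rsqrt)
  qed
  have "((\<lambda>z. S z ^ 2 - 4 * P z - D ^ 2) \<longlongrightarrow> (c1 + c2) ^ 2 - 4 * (c1 * c2) - D ^ 2) F"
    by (intro tendsto_intros S P)
  moreover have "(c1 + c2) ^ 2 - 4 * (c1 * c2) - D ^ 2 = 0"
    by (simp add: D_def power2_eq_square algebra_simps)
  ultimately have "((\<lambda>z. S z ^ 2 - 4 * P z - D ^ 2) \<longlongrightarrow> 0) F" by simp
  hence "((\<lambda>z. sqrt (cmod (S z ^ 2 - 4 * P z - D ^ 2))) \<longlongrightarrow> sqrt (cmod 0)) F"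
    by (intro tendsto_intros)
  hence lim0: "((\<lambda>z. sqrt (cmod (S z ^ 2 - 4 * P z - D ^ 2))) \<longlongrightarrow> 0) F" by simp
  have "((\<lambda>z. w' z - D) \<longlongrightarrow> 0) F"
    by (rule Lim_null_comparison[OF always_eventually[OF allI[OF bound]] lim0])
  from tendsto_add[OF this tendsto_const[of D]]
  have w'lim: "(w' \<longlongrightarrow> D) F" by simp
  define x1 where "x1 z = (S z + w' z) / 2" for z
  define x2 where "x2 z = (S z - w' z) / 2" for z
  have "(x1 \<longlongrightarrow> (c1 + c2 + D) / 2) F" unfolding x1_def by (auto intro!: tendsto_intros S w'lim)
  hence l1: "(x1 \<longlongrightarrow> c1) F" by (simp add: D_def)
  have "(x2 \<longlongrightarrow> (c1 + c2 - D) / 2) F" unfolding x2_def by (auto intro!: tendsto_intros S w'lim)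
  hence l2: "(x2 \<longlongrightarrow> c2) F" by (simp add: D_def)
  have "x1 z + x2 z = S z \<and> x1 z * x2 z = P z" for z
  proof -
    have "x1 z * x2 z = (S z ^ 2 - w' z ^ 2) / 4" unfolding x1_def x2_def by (simp add: power2_eq_square field_simps)
    also have "\<dots> = P z" by (simp add: w'sq)
    finally show ?thesis by (simp add: x1_def x2_def add_divide_distrib[symmetric])
  qed
  with l1 l2 show ?thesis by blast
qed



lemma kernel2:
  assumes "lam 0 \<noteq> lam 1" "t > 0"
  shows "carma_kernel \<sigma> (carma_a lam 2) b t = of_real \<sigma> * (poly b (lam 0) / (lam 0 - lam 1) * exp (lam 0 * of_real t)
     + poly b (lam 1) / (lam 1 - lam 0) * exp (lam 1 * of_real t))"
proof -
  have inj: "inj_on lam {..<2}" using assms by (auto simp: inj_on_def less_2_cases_iff)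
  have "{..<2::nat} - {0} = {1}" "{..<2::nat} - {1} = {0}" by auto
  thus ?thesis using kernel_formula[OF inj assms(2)] by (simp add: numeral_2_eq_2 lessThan_Suc)
qed

lemma struct2:
  fixes g :: "real \<Rightarrow> complex"
  assumes gform: "\<And>t. t > 0 \<Longrightarrow> g t = (\<Sum>i<2. B i * exp (lam i * of_real t))"
  and D: "\<Delta> > 0" and h: "h > 0" and summ: "riemann_summable g \<Delta> h dL"
  shows "poly_B (Phi_Delta lam 2 \<Delta>) (riemann_sum g \<Delta> h dL) n =
    g (\<Delta> * h) * of_real (dL n) + (g (\<Delta> * (1 + h)) - (exp (of_real \<Delta> * lam 0) + exp (of_real \<Delta> * lam 1)) * g (\<Delta> * h)) * of_real (dL (n - 1))"
  using struct[OF gform D h summ, of n]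
  by (simp add: numeral_2_eq_2 Phi_Delta_def lessThan_Suc algebra_simps)



definition concl :: "nat \<Rightarrow> nat \<Rightarrow> real \<Rightarrow> real \<Rightarrow> (nat \<Rightarrow> complex) \<Rightarrow> (nat \<Rightarrow> complex) \<Rightarrow> (real \<Rightarrow> complex) \<Rightarrow> bool" where
 "concl p q \<sigma> h lam mu g \<longleftrightarrow>
      (\<exists>\<theta>0 :: real \<Rightarrow> complex. \<exists>\<delta> :: real \<Rightarrow> complex.
       \<exists>\<epsilon> :: nat \<Rightarrow> real \<Rightarrow> complex. \<exists>\<eta> :: nat \<Rightarrow> real \<Rightarrow> complex.
         (\<delta> \<longlongrightarrow> 0) (at_right 0) \<and>
         (\<forall>i<q. (\<epsilon> i \<longlongrightarrow> 0) (at_right 0)) \<and>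
         (\<forall>i\<in>{1..p - q - 1}. (\<eta> i \<longlongrightarrow> 0) (at_right 0)) \<and>
         (\<forall>\<^sub>F \<Delta> in at_right 0.
            \<theta>0 \<Delta> = of_real (\<sigma> * (h * \<Delta>) ^ (p - q - 1) / fact (p - q - 1)) * (1 + \<delta> \<Delta>) \<and>
            (\<forall>dL. riemann_summable g \<Delta> h dL \<longrightarrow>
              (\<forall>n. poly_B (Phi_Delta lam p \<Delta>) (riemann_sum g \<Delta> h dL) n =
                   poly_B (smult (\<theta>0 \<Delta>)
                     ((\<Prod>i<q. [:1, - (1 - of_real \<Delta> * mu i + of_real \<Delta> * \<epsilon> i \<Delta>):]) *
                      (\<Prod>i\<in>{1..p - q - 1}. [:1, - (of_real (chi (p - q) i h) + \<eta> i \<Delta>):])))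
                     (\<lambda>m. of_real (dL m)) n))))"

lemma es_transfer:
  assumes "\<And>\<Delta>. \<Delta> > 0 \<Longrightarrow> f \<Delta> = es xs \<Delta>" "\<And>n. n < m \<Longrightarrow> mom xs n = 0"
  shows "((\<lambda>\<Delta>. f \<Delta> / of_real \<Delta> ^ m) \<longlongrightarrow> mom xs m / fact m) (at_right 0)"
proof -
  have ev: "eventually (\<lambda>\<Delta>. es xs \<Delta> / of_real \<Delta> ^ m = f \<Delta> / of_real \<Delta> ^ m) (at_right (0::real))"
    using eventually_at_right_less[of 0] by eventually_elim (simp add: assms(1))
  have "((\<lambda>\<Delta>. es xs \<Delta> / of_real \<Delta> ^ m) \<longlongrightarrow> mom xs m / fact m) (at_right 0)"
    by (rule es_limit) (rule assms(2))
  thus ?thesis using tendsto_cong[OF ev] by simp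
qed

lemma ratio_lim:
  fixes f0 f1 :: "real \<Rightarrow> complex"
  assumes "((\<lambda>\<Delta>. f1 \<Delta> / of_real \<Delta> ^ m) \<longlongrightarrow> L1) (at_right 0)"
    "((\<lambda>\<Delta>. f0 \<Delta> / of_real \<Delta> ^ m) \<longlongrightarrow> L0) (at_right 0)" "L0 \<noteq> 0"
  shows "((\<lambda>\<Delta>. f1 \<Delta> / f0 \<Delta>) \<longlongrightarrow> L1 / L0) (at_right 0)"
proof -
  have "eventually (\<lambda>\<Delta>. (f1 \<Delta> / of_real \<Delta> ^ m) / (f0 \<Delta> / of_real \<Delta> ^ m) = f1 \<Delta> / f0 \<Delta>) (at_right (0::real))"
    using eventually_at_right_less[of 0] by eventually_elim simp
  from tendsto_cong[OF this] tendsto_divide[OF assms] show ?thesis by simp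
qed

lemma ev_nz:
  fixes f :: "real \<Rightarrow> complex"
  assumes "((\<lambda>\<Delta>. f \<Delta> / of_real \<Delta> ^ m) \<longlongrightarrow> L) (at_right 0)" "L \<noteq> 0"
  shows "eventually (\<lambda>\<Delta>. f \<Delta> \<noteq> 0) (at_right 0)"
  using tendsto_imp_eventually_ne[OF assms] by eventually_elim auto

lemma to_zero:
  fixes f :: "'a \<Rightarrow> 'b::real_normed_vector"
  shows "(f \<longlongrightarrow> c) F \<Longrightarrow> ((\<lambda>x. f x - c) \<longlongrightarrow> 0) F"
  using tendsto_diff[OF _ tendsto_const, of f c F c] by simp

lemma pos_ev: "eventually (\<lambda>\<Delta>::real. \<Delta> > 0) (at_right 0)"
  by (rule eventually_at_right_less)

lemma case20:
  fixes \<sigma> h :: real and lam mu :: "nat \<Rightarrow> complex"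
  assumes l: "lam 0 \<noteq> lam 1" and s: "\<sigma> > 0" and h: "0 < h" "h < 1"
  shows "concl 2 0 \<sigma> h lam mu (carma_kernel \<sigma> (carma_a lam 2) (carma_b mu 0))"
proof -
  define d where "d = lam 0 - lam 1"
  have dnz: "d \<noteq> 0" using l by (simp add: d_def)
  have d': "lam 1 - lam 0 = - d" "lam (Suc 0) - lam 0 = - d" "lam 0 - lam (Suc 0) = d" by (simp_all add: d_def)
  define g where "g = carma_kernel \<sigma> (carma_a lam 2) (carma_b mu 0)"
  define A0 where "A0 = 1 / d"
  define A1 where "A1 = - 1 / d"
  have gf: "g t = of_real \<sigma> * (A0 * exp (lam 0 * of_real t) + A1 * exp (lam 1 * of_real t))" if "t > 0" for t
    unfolding g_def A0_def A1_def using kernel2[OF l that] by (simp add: carma_b_def d')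
  define \<theta>a where "\<theta>a \<Delta> = g (\<Delta> * h)" for \<Delta>
  define \<theta>b where "\<theta>b \<Delta> = g (\<Delta> * (1 + h)) - (exp (of_real \<Delta> * lam 0) + exp (of_real \<Delta> * lam 1)) * g (\<Delta> * h)" for \<Delta>
  define La where "La = [(of_real \<sigma> * A0, lam 0 * of_real h), (of_real \<sigma> * A1, lam 1 * of_real h)]"
  define Lb where "Lb = [(of_real \<sigma> * A0, lam 0 * (1 + of_real h)), (of_real \<sigma> * A1, lam 1 * (1 + of_real h))]
     @ lmul [(-1, lam 0), (-1, lam 1)] La"
  have ea: "\<theta>a \<Delta> = es La \<Delta>" if "\<Delta> > 0" for \<Delta>
    using that h gf[OF mult_pos_pos[OF that h(1)]] unfolding \<theta>a_def La_def by (simp add: algebra_simps)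
  have eb: "\<theta>b \<Delta> = es Lb \<Delta>" if "\<Delta> > 0" for \<Delta>
    using that h gf[OF mult_pos_pos[OF that, of "1+h"]] gf[OF mult_pos_pos[OF that h(1)]] unfolding \<theta>b_def Lb_def La_def by (simp add: algebra_simps exp_add)
  have ma: "mom La 0 = 0" "mom La 1 = of_real \<sigma> * of_real h"
    unfolding La_def mom_def A0_def A1_def using dnz by (simp_all add: field_simps) (simp add: d_def algebra_simps)
  have mb: "mom Lb 0 = 0" "mom Lb 1 = of_real \<sigma> * (1 - of_real h)"
    unfolding Lb_def La_def mom_def lmul_def A0_def A1_def using dnz by (simp_all add: field_simps) (simp add: d_def algebra_simps)
  have la: "((\<lambda>\<Delta>. \<theta>a \<Delta> / of_real \<Delta> ^ 1) \<longlongrightarrow> of_real \<sigma> * of_real h) (at_right 0)"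
    using es_transfer[of \<theta>a La 1] ea ma by simp
  have lb: "((\<lambda>\<Delta>. \<theta>b \<Delta> / of_real \<Delta> ^ 1) \<longlongrightarrow> of_real \<sigma> * (1 - of_real h)) (at_right 0)"
    using es_transfer[of \<theta>b Lb 1] eb mb by simp
  have nz: "(of_real \<sigma> * of_real h :: complex) \<noteq> 0" using s h by simp
  define \<delta> where "\<delta> \<Delta> = \<theta>a \<Delta> / of_real (\<sigma> * (h * \<Delta>)) - 1" for \<Delta>
  define r where "r \<Delta> = - (\<theta>b \<Delta> / \<theta>a \<Delta>)" for \<Delta>
  define \<eta> :: "nat \<Rightarrow> real \<Rightarrow> complex" where "\<eta> i \<Delta> = r \<Delta> - of_real (chi 2 1 h)" for i \<Delta>
  have "((\<lambda>\<Delta>. (\<theta>a \<Delta> / of_real \<Delta> ^ 1) / (of_real \<sigma> * of_real h) - 1) \<longlongrightarrow> (of_real \<sigma> * of_real h) / (of_real \<sigma> * of_real h) - 1) (at_right 0)"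
    by (intro tendsto_intros la nz)
  hence "((\<lambda>\<Delta>. (\<theta>a \<Delta> / of_real \<Delta> ^ 1) / (of_real \<sigma> * of_real h) - 1) \<longlongrightarrow> 0) (at_right 0)"
    using nz by simp
  moreover have "eventually (\<lambda>\<Delta>. (\<theta>a \<Delta> / of_real \<Delta> ^ 1) / (of_real \<sigma> * of_real h) - 1 = \<delta> \<Delta>) (at_right 0)"
    using pos_ev by eventually_elim (simp add: \<delta>_def field_simps)
  ultimately have l\<delta>: "(\<delta> \<longlongrightarrow> 0) (at_right 0)" using tendsto_cong by fastforce
  have "(r \<longlongrightarrow> - ((of_real \<sigma> * (1 - of_real h)) / (of_real \<sigma> * of_real h))) (at_right 0)"
    unfolding r_def by (intro tendsto_intros ratio_lim[OF lb la nz])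
  moreover have "- ((of_real \<sigma> * (1 - of_real h)) / (of_real \<sigma> * of_real h)) = (of_real (chi 2 1 h) :: complex)"
    using s h by (simp add: chi_def field_simps)
  ultimately have "(r \<longlongrightarrow> of_real (chi 2 1 h)) (at_right 0)" by simp
  hence l\<eta>: "(\<eta> i \<longlongrightarrow> 0) (at_right 0)" for i
    unfolding \<eta>_def by (rule to_zero)
  have gform: "g t = (\<Sum>i<2. (if i = 0 then of_real \<sigma> * A0 else of_real \<sigma> * A1) * exp (lam i * of_real t))" if "t > 0" for t
    using gf[OF that] by (simp add: numeral_2_eq_2 algebra_simps)
  have ev: "eventually (\<lambda>\<Delta>. \<Delta> > 0 \<and> \<theta>a \<Delta> \<noteq> 0) (at_right 0)"
    using pos_ev ev_nz[OF la nz] by eventually_elim auto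
  have main: "\<forall>\<^sub>F \<Delta> in at_right 0.
            \<theta>a \<Delta> = of_real (\<sigma> * (h * \<Delta>) ^ (2 - 0 - 1) / fact (2 - 0 - 1)) * (1 + \<delta> \<Delta>) \<and>
            (\<forall>dL. riemann_summable g \<Delta> h dL \<longrightarrow>
              (\<forall>n. poly_B (Phi_Delta lam 2 \<Delta>) (riemann_sum g \<Delta> h dL) n =
                   poly_B (smult (\<theta>a \<Delta>)
                     ((\<Prod>i<0. [:1, - (1 - of_real \<Delta> * mu i + of_real \<Delta> * (\<lambda>_ _. 0) i \<Delta>):]) *
                      (\<Prod>i\<in>{1..2 - 0 - 1}. [:1, - (of_real (chi (2 - 0) i h) + \<eta> i \<Delta>):])))
                     (\<lambda>m. of_real (dL m)) n))"
    using ev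
  proof eventually_elim
    case (elim \<Delta>)
    hence D: "\<Delta> > 0" and nz0: "\<theta>a \<Delta> \<noteq> 0" by auto
    have "\<theta>a \<Delta> = of_real (\<sigma> * (h * \<Delta>)) * (1 + \<delta> \<Delta>)"
      using D s h by (simp add: \<delta>_def)
    moreover have "poly_B (Phi_Delta lam 2 \<Delta>) (riemann_sum g \<Delta> h dL) n =
                   poly_B (smult (\<theta>a \<Delta>) [:1, - r \<Delta>:]) (\<lambda>m. of_real (dL m)) n"
      if "riemann_summable g \<Delta> h dL" for dL n
    proof -
      have "poly_B (smult (\<theta>a \<Delta>) [:1, - r \<Delta>:]) (\<lambda>m. of_real (dL m)) n
         = (\<Sum>k<2. coeff (smult (\<theta>a \<Delta>) [:1, - r \<Delta>:]) k * of_real (dL (n - int k)))"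
        by (rule poly_B_bound) (simp add: degree_pCons_eq_if)
      also have "\<dots> = \<theta>a \<Delta> * of_real (dL n) + \<theta>b \<Delta> * of_real (dL (n - 1))"
        using nz0 by (simp add: numeral_2_eq_2 r_def)
      also have "\<dots> = poly_B (Phi_Delta lam 2 \<Delta>) (riemann_sum g \<Delta> h dL) n"
        using struct2[OF gform D h(1) that, of n] unfolding \<theta>a_def \<theta>b_def by simp
      finally show ?thesis by simp
    qed
    moreover have "of_real (chi 2 1 h) + \<eta> 1 \<Delta> = r \<Delta>" by (simp add: \<eta>_def)
    ultimately show ?case by simp
  qed
  show ?thesis unfolding concl_def g_def[symmetric]
    apply (rule exI[of _ \<theta>a], rule exI[of _ \<delta>], rule exI[of _ "\<lambda>_ _. 0"], rule exI[of _ \<eta>])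
    using l\<delta> l\<eta> main by simp
qed



lemma case21:
  fixes \<sigma> h :: real and lam mu :: "nat \<Rightarrow> complex"
  assumes l: "lam 0 \<noteq> lam 1" and s: "\<sigma> > 0" and h: "0 < h" "h < 1"
  shows "concl 2 1 \<sigma> h lam mu (carma_kernel \<sigma> (carma_a lam 2) (carma_b mu 1))"
proof -
  define d where "d = lam 0 - lam 1"
  have dnz: "d \<noteq> 0" using l by (simp add: d_def)
  have d': "lam 1 - lam 0 = - d" "lam (Suc 0) - lam 0 = - d" "lam 0 - lam (Suc 0) = d" by (simp_all add: d_def)
  define g where "g = carma_kernel \<sigma> (carma_a lam 2) (carma_b mu 1)"
  define A0 where "A0 = poly (carma_b mu 1) (lam 0) / d"
  define A1 where "A1 = - poly (carma_b mu 1) (lam 1) / d"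
  have gf: "g t = of_real \<sigma> * (A0 * exp (lam 0 * of_real t) + A1 * exp (lam 1 * of_real t))" if "t > 0" for t
    unfolding g_def A0_def A1_def using kernel2[OF l that, of \<sigma> "carma_b mu 1"] by (simp add: d')
  define \<theta>a where "\<theta>a \<Delta> = g (\<Delta> * h)" for \<Delta>
  define \<theta>b where "\<theta>b \<Delta> = g (\<Delta> * (1 + h)) - (exp (of_real \<Delta> * lam 0) + exp (of_real \<Delta> * lam 1)) * g (\<Delta> * h)" for \<Delta>
  define La where "La = [(of_real \<sigma> * A0, lam 0 * of_real h), (of_real \<sigma> * A1, lam 1 * of_real h)]"
  define Lb where "Lb = [(of_real \<sigma> * A0, lam 0 * (1 + of_real h)), (of_real \<sigma> * A1, lam 1 * (1 + of_real h))]
     @ lmul [(-1, lam 0), (-1, lam 1)] La"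
  have ea: "\<theta>a \<Delta> = es La \<Delta>" if "\<Delta> > 0" for \<Delta>
    using that h gf[OF mult_pos_pos[OF that h(1)]] unfolding \<theta>a_def La_def by (simp add: algebra_simps)
  have eb: "\<theta>b \<Delta> = es Lb \<Delta>" if "\<Delta> > 0" for \<Delta>
    using that h gf[OF mult_pos_pos[OF that, of "1+h"]] gf[OF mult_pos_pos[OF that h(1)]] unfolding \<theta>b_def Lb_def La_def by (simp add: algebra_simps exp_add)
  have eab: "\<theta>a \<Delta> + \<theta>b \<Delta> = es (La @ Lb) \<Delta>" if "\<Delta> > 0" for \<Delta>
    using ea[OF that] eb[OF that] by simp
  have ma: "mom La 0 = of_real \<sigma>"
    unfolding La_def mom_def A0_def A1_def carma_b_def using dnz by (simp add: field_simps) (simp add: d_def algebra_simps)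
  have mab: "mom (La @ Lb) 0 = 0" "mom (La @ Lb) 1 = of_real \<sigma> * mu 0"
    unfolding Lb_def La_def mom_def lmul_def A0_def A1_def carma_b_def using dnz by (simp_all add: field_simps) (simp add: d_def algebra_simps)
  have la: "((\<lambda>\<Delta>. \<theta>a \<Delta> / of_real \<Delta> ^ 0) \<longlongrightarrow> of_real \<sigma>) (at_right 0)"
    using es_transfer[of \<theta>a La 0] ea ma by simp
  hence la': "(\<theta>a \<longlongrightarrow> of_real \<sigma>) (at_right 0)" by simp
  have lab: "((\<lambda>\<Delta>. (\<theta>a \<Delta> + \<theta>b \<Delta>) / of_real \<Delta> ^ 1) \<longlongrightarrow> of_real \<sigma> * mu 0) (at_right 0)"
    using es_transfer[of "\<lambda>\<Delta>. \<theta>a \<Delta> + \<theta>b \<Delta>" "La @ Lb" 1] eab mab by simp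
  have nz: "(of_real \<sigma> :: complex) \<noteq> 0" using s by simp
  define \<delta> where "\<delta> \<Delta> = \<theta>a \<Delta> / of_real \<sigma> - 1" for \<Delta>
  define y where "y \<Delta> = - (((\<theta>a \<Delta> + \<theta>b \<Delta>) / of_real \<Delta> ^ 1) / \<theta>a \<Delta>)" for \<Delta>
  define \<epsilon> :: "nat \<Rightarrow> real \<Rightarrow> complex" where "\<epsilon> i \<Delta> = y \<Delta> + mu 0" for i \<Delta>
  have "((\<lambda>\<Delta>. \<theta>a \<Delta> / of_real \<sigma> - 1) \<longlongrightarrow> of_real \<sigma> / of_real \<sigma> - 1) (at_right 0)"
    by (intro tendsto_intros la' nz)
  hence l\<delta>: "(\<delta> \<longlongrightarrow> 0) (at_right 0)" using nz unfolding \<delta>_def by simp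
  have "(y \<longlongrightarrow> - ((of_real \<sigma> * mu 0) / of_real \<sigma>)) (at_right 0)"
    unfolding y_def by (intro tendsto_intros lab la' nz)
  hence "(y \<longlongrightarrow> - mu 0) (at_right 0)" using nz by simp
  hence l\<epsilon>: "(\<epsilon> i \<longlongrightarrow> 0) (at_right 0)" for i
    unfolding \<epsilon>_def using tendsto_add[OF _ tendsto_const, of y "- mu 0" _ "mu 0"] by simp
  have gform: "g t = (\<Sum>i<2. (if i = 0 then of_real \<sigma> * A0 else of_real \<sigma> * A1) * exp (lam i * of_real t))" if "t > 0" for t
    using gf[OF that] by (simp add: numeral_2_eq_2 algebra_simps)
  have ev: "eventually (\<lambda>\<Delta>. \<Delta> > 0 \<and> \<theta>a \<Delta> \<noteq> 0) (at_right 0)"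
    using pos_ev ev_nz[OF la nz] by eventually_elim auto
  have main: "\<forall>\<^sub>F \<Delta> in at_right 0.
            \<theta>a \<Delta> = of_real (\<sigma> * (h * \<Delta>) ^ (2 - 1 - 1) / fact (2 - 1 - 1)) * (1 + \<delta> \<Delta>) \<and>
            (\<forall>dL. riemann_summable g \<Delta> h dL \<longrightarrow>
              (\<forall>n. poly_B (Phi_Delta lam 2 \<Delta>) (riemann_sum g \<Delta> h dL) n =
                   poly_B (smult (\<theta>a \<Delta>)
                     ((\<Prod>i<1. [:1, - (1 - of_real \<Delta> * mu i + of_real \<Delta> * \<epsilon> i \<Delta>):]) *
                      (\<Prod>i\<in>{1..2 - 1 - 1}. [:1, - (of_real (chi (2 - 1) i h) + (\<lambda>_ _. 0) i \<Delta>):])))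
                     (\<lambda>m. of_real (dL m)) n))"
    using ev
  proof eventually_elim
    case (elim \<Delta>)
    hence D: "\<Delta> > 0" and nz0: "\<theta>a \<Delta> \<noteq> 0" by auto
    have "\<theta>a \<Delta> = of_real \<sigma> * (1 + \<delta> \<Delta>)"
      using D s h by (simp add: \<delta>_def)
    moreover have "poly_B (Phi_Delta lam 2 \<Delta>) (riemann_sum g \<Delta> h dL) n =
                   poly_B (smult (\<theta>a \<Delta>) [:1, - (1 + of_real \<Delta> * y \<Delta>):]) (\<lambda>m. of_real (dL m)) n"
      if "riemann_summable g \<Delta> h dL" for dL n
    proof -
      have "poly_B (smult (\<theta>a \<Delta>) [:1, - (1 + of_real \<Delta> * y \<Delta>):]) (\<lambda>m. of_real (dL m)) n
         = (\<Sum>k<2. coeff (smult (\<theta>a \<Delta>) [:1, - (1 + of_real \<Delta> * y \<Delta>):]) k * of_real (dL (n - int k)))"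
        by (rule poly_B_bound) (simp add: degree_pCons_eq_if)
      also have "\<dots> = \<theta>a \<Delta> * of_real (dL n) + \<theta>b \<Delta> * of_real (dL (n - 1))"
        using nz0 D by (simp add: numeral_2_eq_2 y_def field_simps)
      also have "\<dots> = poly_B (Phi_Delta lam 2 \<Delta>) (riemann_sum g \<Delta> h dL) n"
        using struct2[OF gform D h(1) that, of n] unfolding \<theta>a_def \<theta>b_def by simp
      finally show ?thesis by simp
    qed
    moreover have P: "(\<Prod>i<1. [:1, - (1 - of_real \<Delta> * mu i + of_real \<Delta> * \<epsilon> i \<Delta>):]) *
                      (\<Prod>i\<in>{1..2 - 1 - 1}. [:1, - (of_real (chi (2 - 1) i h) + (\<lambda>_ _. 0) i \<Delta>):])
       = [:1, - (1 + of_real \<Delta> * y \<Delta>):]"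
      by (simp add: \<epsilon>_def algebra_simps)
    ultimately show ?case unfolding P by simp
  qed
  show ?thesis unfolding concl_def g_def[symmetric]
    apply (rule exI[of _ \<theta>a], rule exI[of _ \<delta>], rule exI[of _ \<epsilon>], rule exI[of _ "\<lambda>_ _. 0"])
    using l\<delta> l\<epsilon> main by simp
qed



lemma kernel3:
  assumes "lam 0 \<noteq> lam 1" "lam 0 \<noteq> lam 2" "lam 1 \<noteq> lam 2" "t > 0"
  shows "carma_kernel \<sigma> (carma_a lam 3) b t = of_real \<sigma> *
     (poly b (lam 0) / ((lam 0 - lam 1) * (lam 0 - lam 2)) * exp (lam 0 * of_real t)
     - poly b (lam 1) / ((lam 0 - lam 1) * (lam 1 - lam 2)) * exp (lam 1 * of_real t)
     + poly b (lam 2) / ((lam 0 - lam 2) * (lam 1 - lam 2)) * exp (lam 2 * of_real t))"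
proof -
  have inj: "inj_on lam {..<3}" using assms
    by (auto simp: inj_on_def eval_nat_numeral less_Suc_eq)
  define F where "F i = poly b (lam i) / (\<Prod>k\<in>{..<3}-{i}. (lam i - lam k)) * exp (lam i * of_real t)" for i
  have K: "carma_kernel \<sigma> (carma_a lam 3) b t = of_real \<sigma> * (\<Sum>i<3. F i)"
    using kernel_formula[OF inj assms(4), of \<sigma> b] by (simp add: F_def)
  have u: "{..<3::nat} = {0,1,2}" by auto
  have S: "(\<Sum>i<3. F i) = F 0 + F 1 + F 2" unfolding u by simp
  have s: "{0,1,2::nat} - {0} = {1,2}" "{0,1,2::nat} - {1} = {0,2}" "{0,1,2::nat} - {2} = {0,1}" by auto
  have e1: "(lam 1 - lam 0) * (lam 1 - lam 2) = - ((lam 0 - lam 1) * (lam 1 - lam 2))" by (simp add: algebra_simps)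
  have e2: "(lam 2 - lam 0) * (lam 2 - lam 1) = (lam 0 - lam 2) * (lam 1 - lam 2)" by (simp add: algebra_simps)
  have F0: "F 0 = poly b (lam 0) / ((lam 0 - lam 1) * (lam 0 - lam 2)) * exp (lam 0 * of_real t)"
    unfolding F_def u s by simp
  have F1: "F 1 = - (poly b (lam 1) / ((lam 0 - lam 1) * (lam 1 - lam 2)) * exp (lam 1 * of_real t))"
    unfolding F_def u s using e1 by (simp add: divide_minus_right[symmetric] del: divide_minus_right)
  have F2: "F 2 = poly b (lam 2) / ((lam 0 - lam 2) * (lam 1 - lam 2)) * exp (lam 2 * of_real t)"
    unfolding F_def u s by (simp, simp add: algebra_simps)
  show ?thesis unfolding K S F0 F1 F2 by simp
qed

lemma struct3:
  fixes g :: "real \<Rightarrow> complex"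
  assumes gform: "\<And>t. t > 0 \<Longrightarrow> g t = (\<Sum>i<3. B i * exp (lam i * of_real t))"
  and D: "\<Delta> > 0" and h: "h > 0" and summ: "riemann_summable g \<Delta> h dL"
  shows "poly_B (Phi_Delta lam 3 \<Delta>) (riemann_sum g \<Delta> h dL) n =
    g (\<Delta> * h) * of_real (dL n)
   + (g (\<Delta> * (1 + h)) - (exp (of_real \<Delta> * lam 0) + exp (of_real \<Delta> * lam 1) + exp (of_real \<Delta> * lam 2)) * g (\<Delta> * h)) * of_real (dL (n - 1))
   + (g (\<Delta> * (2 + h)) - (exp (of_real \<Delta> * lam 0) + exp (of_real \<Delta> * lam 1) + exp (of_real \<Delta> * lam 2)) * g (\<Delta> * (1 + h))
      + (exp (of_real \<Delta> * lam 0) * exp (of_real \<Delta> * lam 1) + exp (of_real \<Delta> * lam 0) * exp (of_real \<Delta> * lam 2)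
         + exp (of_real \<Delta> * lam 1) * exp (of_real \<Delta> * lam 2)) * g (\<Delta> * h)) * of_real (dL (n - 2))"
  using struct[OF gform D h summ, of n]
  by (simp add: eval_nat_numeral Phi_Delta_def lessThan_Suc algebra_simps)



definition G3 :: "complex \<Rightarrow> complex \<Rightarrow> complex \<Rightarrow> (nat \<Rightarrow> complex) \<Rightarrow> complex \<Rightarrow> (complex \<times> complex) list" where
 "G3 a0 a1 a2 lam c = [(a0, lam 0 * c), (a1, lam 1 * c), (a2, lam 2 * c)]"
definition Ph1 :: "(nat \<Rightarrow> complex) \<Rightarrow> (complex \<times> complex) list" where
 "Ph1 lam = [(-1, lam 0), (-1, lam 1), (-1, lam 2)]"
definition Ph2 :: "(nat \<Rightarrow> complex) \<Rightarrow> (complex \<times> complex) list" where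
 "Ph2 lam = [(1, lam 0 + lam 1), (1, lam 0 + lam 2), (1, lam 1 + lam 2)]"

lemma es3:
  fixes g :: "real \<Rightarrow> complex"
  assumes gf: "\<And>t. t > 0 \<Longrightarrow> g t = a0 * exp (lam 0 * of_real t) + a1 * exp (lam 1 * of_real t) + a2 * exp (lam 2 * of_real t)"
  and D: "\<Delta> > 0" and h: "h > 0"
  shows "g (\<Delta> * h) = es (G3 a0 a1 a2 lam (of_real h)) \<Delta>"
    "g (\<Delta> * (1 + h)) - (exp (of_real \<Delta> * lam 0) + exp (of_real \<Delta> * lam 1) + exp (of_real \<Delta> * lam 2)) * g (\<Delta> * h)
      = es (G3 a0 a1 a2 lam (1 + of_real h) @ lmul (Ph1 lam) (G3 a0 a1 a2 lam (of_real h))) \<Delta>"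
    "g (\<Delta> * (2 + h)) - (exp (of_real \<Delta> * lam 0) + exp (of_real \<Delta> * lam 1) + exp (of_real \<Delta> * lam 2)) * g (\<Delta> * (1 + h))
      + (exp (of_real \<Delta> * lam 0) * exp (of_real \<Delta> * lam 1) + exp (of_real \<Delta> * lam 0) * exp (of_real \<Delta> * lam 2)
         + exp (of_real \<Delta> * lam 1) * exp (of_real \<Delta> * lam 2)) * g (\<Delta> * h)
      = es (G3 a0 a1 a2 lam (2 + of_real h) @ lmul (Ph1 lam) (G3 a0 a1 a2 lam (1 + of_real h))
            @ lmul (Ph2 lam) (G3 a0 a1 a2 lam (of_real h))) \<Delta>"
proof -
  have p0: "\<Delta> * h > 0" using D h by simp
  have p1: "\<Delta> * (1 + h) > 0" using D h by simp
  have p2: "\<Delta> * (2 + h) > 0" using D h by simp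
  note g0 = gf[OF p0] and g1 = gf[OF p1] and g2 = gf[OF p2]
  show "g (\<Delta> * h) = es (G3 a0 a1 a2 lam (of_real h)) \<Delta>"
    unfolding g0 G3_def by (simp add: algebra_simps)
  show "g (\<Delta> * (1 + h)) - (exp (of_real \<Delta> * lam 0) + exp (of_real \<Delta> * lam 1) + exp (of_real \<Delta> * lam 2)) * g (\<Delta> * h)
      = es (G3 a0 a1 a2 lam (1 + of_real h) @ lmul (Ph1 lam) (G3 a0 a1 a2 lam (of_real h))) \<Delta>"
    unfolding g0 g1 G3_def Ph1_def by (simp add: algebra_simps exp_add)
  show "g (\<Delta> * (2 + h)) - (exp (of_real \<Delta> * lam 0) + exp (of_real \<Delta> * lam 1) + exp (of_real \<Delta> * lam 2)) * g (\<Delta> * (1 + h))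
      + (exp (of_real \<Delta> * lam 0) * exp (of_real \<Delta> * lam 1) + exp (of_real \<Delta> * lam 0) * exp (of_real \<Delta> * lam 2)
         + exp (of_real \<Delta> * lam 1) * exp (of_real \<Delta> * lam 2)) * g (\<Delta> * h)
      = es (G3 a0 a1 a2 lam (2 + of_real h) @ lmul (Ph1 lam) (G3 a0 a1 a2 lam (1 + of_real h))
            @ lmul (Ph2 lam) (G3 a0 a1 a2 lam (of_real h))) \<Delta>"
    unfolding g0 g1 g2 G3_def Ph1_def Ph2_def by (simp add: algebra_simps exp_add)
qed



definition scl :: "complex \<Rightarrow> (complex \<times> complex) list \<Rightarrow> (complex \<times> complex) list" where
  "scl D xs = map (\<lambda>(c,k). (c / D, k)) xs"

lemma mom_scl: "mom (scl D xs) n = mom xs n / D"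
  by (induction xs) (auto simp: scl_def mom_def add_divide_distrib)

lemma scl_append: "scl D xs @ scl D ys = scl D (xs @ ys)"
  by (simp add: scl_def)

lemma lmul_scl: "lmul ys (scl D xs) = scl D (lmul ys xs)"
  by (induction ys) (auto simp: scl_def lmul_def)

lemma G3_scl: "G3 (x0 / D) (x1 / D) (x2 / D) lam c = scl D (G3 x0 x1 x2 lam c)"
  by (simp add: scl_def G3_def)

lemma lim_num:
  assumes "\<And>\<Delta>. \<Delta> > 0 \<Longrightarrow> f \<Delta> = es (scl Dn L) \<Delta>" "Dn \<noteq> 0"
    "\<And>n. n < m \<Longrightarrow> mom L n = 0" "mom L m = T * Dn"
  shows "((\<lambda>\<Delta>. f \<Delta> / of_real \<Delta> ^ m) \<longlongrightarrow> T / fact m) (at_right 0)"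
  using es_transfer[of f "scl Dn L" m, OF assms(1)] assms(2-4) by (simp add: mom_scl)

lemma setup3:
  fixes \<sigma> h :: real and lam :: "nat \<Rightarrow> complex" and b :: "complex poly"
  assumes l: "lam 0 \<noteq> lam 1" "lam 0 \<noteq> lam 2" "lam 1 \<noteq> lam 2" and h: "h > 0"
  defines "g \<equiv> carma_kernel \<sigma> (carma_a lam 3) b"
  defines "Dn \<equiv> (lam 0 - lam 1) * (lam 0 - lam 2) * (lam 1 - lam 2)"
  defines "x0 \<equiv> of_real \<sigma> * poly b (lam 0) * (lam 1 - lam 2)"
  defines "x1 \<equiv> - (of_real \<sigma> * poly b (lam 1) * (lam 0 - lam 2))"
  defines "x2 \<equiv> of_real \<sigma> * poly b (lam 2) * (lam 0 - lam 1)"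
  shows "Dn \<noteq> 0"
    "\<And>t. t > 0 \<Longrightarrow> g t = (\<Sum>i<3. (if i = 0 then x0 / Dn else if i = 1 then x1 / Dn else x2 / Dn) * exp (lam i * of_real t))"
    "\<And>\<Delta>. \<Delta> > 0 \<Longrightarrow> g (\<Delta> * h) = es (scl Dn (G3 x0 x1 x2 lam (of_real h))) \<Delta>"
    "\<And>\<Delta>. \<Delta> > 0 \<Longrightarrow> g (\<Delta> * (1 + h)) - (exp (of_real \<Delta> * lam 0) + exp (of_real \<Delta> * lam 1) + exp (of_real \<Delta> * lam 2)) * g (\<Delta> * h)
      = es (scl Dn (G3 x0 x1 x2 lam (1 + of_real h) @ lmul (Ph1 lam) (G3 x0 x1 x2 lam (of_real h)))) \<Delta>"
    "\<And>\<Delta>. \<Delta> > 0 \<Longrightarrow> g (\<Delta> * (2 + h)) - (exp (of_real \<Delta> * lam 0) + exp (of_real \<Delta> * lam 1) + exp (of_real \<Delta> * lam 2)) * g (\<Delta> * (1 + h))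
      + (exp (of_real \<Delta> * lam 0) * exp (of_real \<Delta> * lam 1) + exp (of_real \<Delta> * lam 0) * exp (of_real \<Delta> * lam 2)
         + exp (of_real \<Delta> * lam 1) * exp (of_real \<Delta> * lam 2)) * g (\<Delta> * h)
      = es (scl Dn (G3 x0 x1 x2 lam (2 + of_real h) @ lmul (Ph1 lam) (G3 x0 x1 x2 lam (1 + of_real h))
            @ lmul (Ph2 lam) (G3 x0 x1 x2 lam (of_real h)))) \<Delta>"
proof -
  show Dnz: "Dn \<noteq> 0" using l by (simp add: Dn_def)
  have gf: "g t = x0 / Dn * exp (lam 0 * of_real t) + x1 / Dn * exp (lam 1 * of_real t) + x2 / Dn * exp (lam 2 * of_real t)"
    if "t > 0" for t
  proof -
    have d: "lam 0 - lam 1 \<noteq> 0" "lam 0 - lam 2 \<noteq> 0" "lam 1 - lam 2 \<noteq> 0" using l by auto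
    have c: "c \<noteq> 0 \<Longrightarrow> a * c / (bb * c) = a / bb" for a bb c :: complex by simp
    have "x0 / Dn = (of_real \<sigma> * poly b (lam 0)) * (lam 1 - lam 2) / (((lam 0 - lam 1) * (lam 0 - lam 2)) * (lam 1 - lam 2))"
      by (simp add: x0_def Dn_def)
    also have "\<dots> = of_real \<sigma> * (poly b (lam 0) / ((lam 0 - lam 1) * (lam 0 - lam 2)))"
      by (subst c[OF d(3)]) simp
    finally have 1: "x0 / Dn = of_real \<sigma> * (poly b (lam 0) / ((lam 0 - lam 1) * (lam 0 - lam 2)))" .
    have "x1 / Dn = - ((of_real \<sigma> * poly b (lam 1)) * (lam 0 - lam 2) / (((lam 0 - lam 1) * (lam 1 - lam 2)) * (lam 0 - lam 2)))"
      by (simp add: x1_def Dn_def mult_ac)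
    also have "\<dots> = - (of_real \<sigma> * (poly b (lam 1) / ((lam 0 - lam 1) * (lam 1 - lam 2))))"
      by (subst c[OF d(2)]) simp
    finally have 2: "x1 / Dn = - (of_real \<sigma> * (poly b (lam 1) / ((lam 0 - lam 1) * (lam 1 - lam 2))))" .
    have "x2 / Dn = (of_real \<sigma> * poly b (lam 2)) * (lam 0 - lam 1) / (((lam 0 - lam 2) * (lam 1 - lam 2)) * (lam 0 - lam 1))"
      by (simp add: x2_def Dn_def mult_ac)
    also have "\<dots> = of_real \<sigma> * (poly b (lam 2) / ((lam 0 - lam 2) * (lam 1 - lam 2)))"
      by (subst c[OF d(1)]) simp
    finally have 3: "x2 / Dn = of_real \<sigma> * (poly b (lam 2) / ((lam 0 - lam 2) * (lam 1 - lam 2)))" .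
    show ?thesis
      unfolding g_def kernel3[OF l that] 1 2 3 by (simp add: algebra_simps)
  qed
  show "\<And>t. t > 0 \<Longrightarrow> g t = (\<Sum>i<3. (if i = 0 then x0 / Dn else if i = 1 then x1 / Dn else x2 / Dn) * exp (lam i * of_real t))"
    using gf by (simp add: eval_nat_numeral)
  note e = es3[of g "x0 / Dn" lam "x1 / Dn" "x2 / Dn", OF gf _ h, unfolded G3_scl lmul_scl scl_append]
  show "\<And>\<Delta>. \<Delta> > 0 \<Longrightarrow> g (\<Delta> * h) = es (scl Dn (G3 x0 x1 x2 lam (of_real h))) \<Delta>"
    using e(1) by blast
  show "\<And>\<Delta>. \<Delta> > 0 \<Longrightarrow> g (\<Delta> * (1 + h)) - (exp (of_real \<Delta> * lam 0) + exp (of_real \<Delta> * lam 1) + exp (of_real \<Delta> * lam 2)) * g (\<Delta> * h)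
      = es (scl Dn (G3 x0 x1 x2 lam (1 + of_real h) @ lmul (Ph1 lam) (G3 x0 x1 x2 lam (of_real h)))) \<Delta>"
    using e(2) by blast
  show "\<And>\<Delta>. \<Delta> > 0 \<Longrightarrow> g (\<Delta> * (2 + h)) - (exp (of_real \<Delta> * lam 0) + exp (of_real \<Delta> * lam 1) + exp (of_real \<Delta> * lam 2)) * g (\<Delta> * (1 + h))
      + (exp (of_real \<Delta> * lam 0) * exp (of_real \<Delta> * lam 1) + exp (of_real \<Delta> * lam 0) * exp (of_real \<Delta> * lam 2)
         + exp (of_real \<Delta> * lam 1) * exp (of_real \<Delta> * lam 2)) * g (\<Delta> * h)
      = es (scl Dn (G3 x0 x1 x2 lam (2 + of_real h) @ lmul (Ph1 lam) (G3 x0 x1 x2 lam (1 + of_real h))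
            @ lmul (Ph2 lam) (G3 x0 x1 x2 lam (of_real h)))) \<Delta>"
    using e(3) by blast
qed



lemma mom30:
  fixes s c :: complex and lam :: "nat \<Rightarrow> complex"
  defines "Dn \<equiv> (lam 0 - lam 1) * (lam 0 - lam 2) * (lam 1 - lam 2)"
  defines "L \<equiv> G3 (s * (lam 1 - lam 2)) (- (s * (lam 0 - lam 2))) (s * (lam 0 - lam 1)) lam"
  shows "mom (L c) 0 = 0" "mom (L c) 1 = 0" "mom (L c) 2 = s * c^2 * Dn"
    "mom (L (1 + c) @ lmul (Ph1 lam) (L c)) 0 = 0"
    "mom (L (1 + c) @ lmul (Ph1 lam) (L c)) 1 = 0"
    "mom (L (1 + c) @ lmul (Ph1 lam) (L c)) 2 = s * ((1 + c)^2 - 3 * c^2) * Dn"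
    "mom (L (2 + c) @ lmul (Ph1 lam) (L (1 + c)) @ lmul (Ph2 lam) (L c)) 0 = 0"
    "mom (L (2 + c) @ lmul (Ph1 lam) (L (1 + c)) @ lmul (Ph2 lam) (L c)) 1 = 0"
    "mom (L (2 + c) @ lmul (Ph1 lam) (L (1 + c)) @ lmul (Ph2 lam) (L c)) 2 = s * (c - 1)^2 * Dn"
  unfolding L_def G3_def Ph1_def Ph2_def lmul_def mom_def Dn_def
  by (simp; algebra)+

lemma mom31:
  fixes s c m :: complex and lam :: "nat \<Rightarrow> complex"
  defines "Dn \<equiv> (lam 0 - lam 1) * (lam 0 - lam 2) * (lam 1 - lam 2)"
  defines "L \<equiv> G3 (s * (m + lam 0) * (lam 1 - lam 2)) (- (s * (m + lam 1) * (lam 0 - lam 2))) (s * (m + lam 2) * (lam 0 - lam 1)) lam"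
  shows "mom (L c) 0 = 0" "mom (L c) 1 = s * c * Dn"
    "mom (L (1 + c) @ lmul (Ph1 lam) (L c)) 0 = 0"
    "mom (L (1 + c) @ lmul (Ph1 lam) (L c)) 1 = s * (1 - 2 * c) * Dn"
    "mom (L (2 + c) @ lmul (Ph1 lam) (L (1 + c)) @ lmul (Ph2 lam) (L c)) 0 = 0"
    "mom (L (2 + c) @ lmul (Ph1 lam) (L (1 + c)) @ lmul (Ph2 lam) (L c)) 1 = s * (c - 1) * Dn"
    "mom (L c @ (L (1 + c) @ lmul (Ph1 lam) (L c)) @ (L (2 + c) @ lmul (Ph1 lam) (L (1 + c)) @ lmul (Ph2 lam) (L c))) 0 = 0"
    "mom (L c @ (L (1 + c) @ lmul (Ph1 lam) (L c)) @ (L (2 + c) @ lmul (Ph1 lam) (L (1 + c)) @ lmul (Ph2 lam) (L c))) 1 = 0"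
    "mom (L c @ (L (1 + c) @ lmul (Ph1 lam) (L c)) @ (L (2 + c) @ lmul (Ph1 lam) (L (1 + c)) @ lmul (Ph2 lam) (L c))) 2 = 2 * s * m * Dn"
  unfolding L_def G3_def Ph1_def Ph2_def lmul_def mom_def Dn_def
  by (simp; algebra)+

lemma mom32:
  fixes s c ma mb :: complex and lam :: "nat \<Rightarrow> complex"
  defines "Dn \<equiv> (lam 0 - lam 1) * (lam 0 - lam 2) * (lam 1 - lam 2)"
  defines "L \<equiv> G3 (s * ((ma + lam 0) * (mb + lam 0)) * (lam 1 - lam 2)) (- (s * ((ma + lam 1) * (mb + lam 1)) * (lam 0 - lam 2)))
      (s * ((ma + lam 2) * (mb + lam 2)) * (lam 0 - lam 1)) lam"
  shows "mom (L c) 0 = s * Dn"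
    "mom (L c @ L c @ (L (1 + c) @ lmul (Ph1 lam) (L c))) 0 = 0"
    "mom (L c @ L c @ (L (1 + c) @ lmul (Ph1 lam) (L c))) 1 = s * (ma + mb) * Dn"
    "mom (L c @ (L (1 + c) @ lmul (Ph1 lam) (L c)) @ (L (2 + c) @ lmul (Ph1 lam) (L (1 + c)) @ lmul (Ph2 lam) (L c))) 0 = 0"
    "mom (L c @ (L (1 + c) @ lmul (Ph1 lam) (L c)) @ (L (2 + c) @ lmul (Ph1 lam) (L (1 + c)) @ lmul (Ph2 lam) (L c))) 1 = 0"
    "mom (L c @ (L (1 + c) @ lmul (Ph1 lam) (L c)) @ (L (2 + c) @ lmul (Ph1 lam) (L (1 + c)) @ lmul (Ph2 lam) (L c))) 2 = 2 * s * ma * mb * Dn"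
  unfolding L_def G3_def Ph1_def Ph2_def lmul_def mom_def Dn_def
  by (simp; algebra)+



lemma chi3:
  fixes h :: real
  assumes h: "0 < h" "h < 1"
  shows "chi 3 1 h + chi 3 2 h = - ((1 + h)^2 - 3 * h^2) / h^2" "chi 3 1 h * chi 3 2 h = (h - 1)^2 / h^2"
proof -
  define x where "x = (h - 1) * h"
  define u where "u = sqrt (1 - 4 * (h - 1) * h)"
  have xn: "x < 0" using h by (simp add: x_def mult_neg_pos)
  have u2: "u^2 = 1 - 4 * x" unfolding u_def x_def using xn[unfolded x_def]
    by (simp add: algebra_simps)
  define D1 where "D1 = 2 * x - 1 + u"
  define D2 where "D2 = 2 * x - 1 - u"
  have c1: "chi 3 1 h = 2 * (h - 1)^2 / D1" by (simp add: chi_def D1_def x_def u_def)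
  have c2: "chi 3 2 h = 2 * (h - 1)^2 / D2" by (simp add: chi_def D2_def x_def u_def)
  have P: "D1 * D2 = 4 * x^2" unfolding D1_def D2_def using u2 by (simp add: algebra_simps power2_eq_square)
  have "x \<noteq> 0" using xn by simp
  hence "D1 * D2 \<noteq> 0" unfolding P by simp
  hence n1: "D1 \<noteq> 0" and n2: "D2 \<noteq> 0" by auto
  have hx: "h \<noteq> 0" "h - 1 \<noteq> 0" using h by auto
  have "chi 3 1 h + chi 3 2 h = 2 * (h - 1)^2 * (D1 + D2) / (D1 * D2)"
    unfolding c1 c2 using n1 n2 by (simp add: field_simps)
  also have "\<dots> = 2 * (h - 1)^2 * (4 * x - 2) / (4 * x^2)" unfolding P by (simp add: D1_def D2_def)
  also have "\<dots> = - ((1 + h)^2 - 3 * h^2) / h^2"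
    using hx \<open>x \<noteq> 0\<close> by (subst frac_eq_eq) (simp_all add: x_def, algebra)
  finally show "chi 3 1 h + chi 3 2 h = - ((1 + h)^2 - 3 * h^2) / h^2" .
  have "chi 3 1 h * chi 3 2 h = 4 * (h - 1)^4 / (D1 * D2)"
    unfolding c1 c2 by (simp add: power2_eq_square power4_eq_xxxx)
  also have "\<dots> = (h - 1)^2 / h^2"
    unfolding P using hx \<open>x \<noteq> 0\<close> by (subst frac_eq_eq) (simp_all add: x_def, algebra)
  finally show "chi 3 1 h * chi 3 2 h = (h - 1)^2 / h^2" .
qed



lemma poly_B3: "poly_B [:a, b, c:] Y n = a * Y n + b * Y (n - 1) + c * Y (n - 2)"
proof -
  have "poly_B [:a, b, c:] Y n = (\<Sum>k<3. coeff [:a, b, c:] k * Y (n - int k))"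
    by (rule poly_B_bound) (simp add: degree_pCons_eq_if)
  thus ?thesis by (simp add: eval_nat_numeral algebra_simps)
qed

lemma case30:
  fixes \<sigma> h :: real and lam mu :: "nat \<Rightarrow> complex"
  assumes l: "lam 0 \<noteq> lam 1" "lam 0 \<noteq> lam 2" "lam 1 \<noteq> lam 2" and s: "\<sigma> > 0" and h: "0 < h" "h < 1"
  shows "concl 3 0 \<sigma> h lam mu (carma_kernel \<sigma> (carma_a lam 3) (carma_b mu 0))"
proof -
  define g where "g = carma_kernel \<sigma> (carma_a lam 3) (carma_b mu 0)"
  define Dn where "Dn = (lam 0 - lam 1) * (lam 0 - lam 2) * (lam 1 - lam 2)"
  define x0 where "x0 = of_real \<sigma> * poly (carma_b mu 0) (lam 0) * (lam 1 - lam 2)"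
  define x1 where "x1 = - (of_real \<sigma> * poly (carma_b mu 0) (lam 1) * (lam 0 - lam 2))"
  define x2 where "x2 = of_real \<sigma> * poly (carma_b mu 0) (lam 2) * (lam 0 - lam 1)"
  have S: "Dn \<noteq> 0"
    "\<And>t. t > 0 \<Longrightarrow> g t = (\<Sum>i<3. (if i = 0 then x0 / Dn else if i = 1 then x1 / Dn else x2 / Dn) * exp (lam i * of_real t))"
    "\<And>\<Delta>. \<Delta> > 0 \<Longrightarrow> g (\<Delta> * h) = es (scl Dn (G3 x0 x1 x2 lam (of_real h))) \<Delta>"
    "\<And>\<Delta>. \<Delta> > 0 \<Longrightarrow> g (\<Delta> * (1 + h)) - (exp (of_real \<Delta> * lam 0) + exp (of_real \<Delta> * lam 1) + exp (of_real \<Delta> * lam 2)) * g (\<Delta> * h)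
      = es (scl Dn (G3 x0 x1 x2 lam (1 + of_real h) @ lmul (Ph1 lam) (G3 x0 x1 x2 lam (of_real h)))) \<Delta>"
    "\<And>\<Delta>. \<Delta> > 0 \<Longrightarrow> g (\<Delta> * (2 + h)) - (exp (of_real \<Delta> * lam 0) + exp (of_real \<Delta> * lam 1) + exp (of_real \<Delta> * lam 2)) * g (\<Delta> * (1 + h))
      + (exp (of_real \<Delta> * lam 0) * exp (of_real \<Delta> * lam 1) + exp (of_real \<Delta> * lam 0) * exp (of_real \<Delta> * lam 2)
         + exp (of_real \<Delta> * lam 1) * exp (of_real \<Delta> * lam 2)) * g (\<Delta> * h)
      = es (scl Dn (G3 x0 x1 x2 lam (2 + of_real h) @ lmul (Ph1 lam) (G3 x0 x1 x2 lam (1 + of_real h))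
            @ lmul (Ph2 lam) (G3 x0 x1 x2 lam (of_real h)))) \<Delta>"
    unfolding g_def Dn_def x0_def x1_def x2_def by (rule setup3[OF l h(1)]; assumption)+
  have xs: "x0 = of_real \<sigma> * (lam 1 - lam 2)" "x1 = - (of_real \<sigma> * (lam 0 - lam 2))" "x2 = of_real \<sigma> * (lam 0 - lam 1)"
    by (simp_all add: x0_def x1_def x2_def carma_b_def)
  define L where "L c = G3 x0 x1 x2 lam c" for c
  note M = mom30[where s="of_real \<sigma>" and lam=lam and c="of_real h", folded xs, folded L_def Dn_def]
  define \<theta>a where "\<theta>a \<Delta> = g (\<Delta> * h)" for \<Delta>
  define \<theta>b where "\<theta>b \<Delta> = g (\<Delta> * (1 + h)) - (exp (of_real \<Delta> * lam 0) + exp (of_real \<Delta> * lam 1) + exp (of_real \<Delta> * lam 2)) * g (\<Delta> * h)" for \<Delta>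
  define \<theta>c where "\<theta>c \<Delta> = g (\<Delta> * (2 + h)) - (exp (of_real \<Delta> * lam 0) + exp (of_real \<Delta> * lam 1) + exp (of_real \<Delta> * lam 2)) * g (\<Delta> * (1 + h))
      + (exp (of_real \<Delta> * lam 0) * exp (of_real \<Delta> * lam 1) + exp (of_real \<Delta> * lam 0) * exp (of_real \<Delta> * lam 2)
         + exp (of_real \<Delta> * lam 1) * exp (of_real \<Delta> * lam 2)) * g (\<Delta> * h)" for \<Delta>
  have lt2: "n < 2 \<Longrightarrow> n = 0 \<or> n = 1" for n :: nat by auto
  have la: "((\<lambda>\<Delta>. \<theta>a \<Delta> / of_real \<Delta> ^ 2) \<longlongrightarrow> of_real \<sigma> * of_real h ^ 2 / fact 2) (at_right 0)"
    by (rule lim_num[OF S(3)[folded \<theta>a_def, unfolded L_def[symmetric]] S(1)])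
       (use M lt2 in \<open>auto simp: L_def\<close>)
  have lb: "((\<lambda>\<Delta>. \<theta>b \<Delta> / of_real \<Delta> ^ 2) \<longlongrightarrow> of_real \<sigma> * ((1 + of_real h)^2 - 3 * of_real h^2) / fact 2) (at_right 0)"
    by (rule lim_num[OF S(4)[folded \<theta>a_def \<theta>b_def, unfolded L_def[symmetric]] S(1)])
       (use M lt2 in \<open>auto simp: L_def\<close>)
  have lc: "((\<lambda>\<Delta>. \<theta>c \<Delta> / of_real \<Delta> ^ 2) \<longlongrightarrow> of_real \<sigma> * (of_real h - 1)^2 / fact 2) (at_right 0)"
    by (rule lim_num[OF S(5)[folded \<theta>a_def \<theta>b_def \<theta>c_def, unfolded L_def[symmetric]] S(1)])
       (use M lt2 in \<open>auto simp: L_def\<close>)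
  have nz: "of_real \<sigma> * of_real h ^ 2 / fact 2 \<noteq> (0::complex)" using s h by simp
  define SS where "SS \<Delta> = - (\<theta>b \<Delta> / \<theta>a \<Delta>)" for \<Delta>
  define PP where "PP \<Delta> = \<theta>c \<Delta> / \<theta>a \<Delta>" for \<Delta>
  have hc: "(of_real h :: complex) \<noteq> 0" using h by simp
  have "(SS \<longlongrightarrow> - ((of_real \<sigma> * ((1 + of_real h)^2 - 3 * of_real h^2) / fact 2) / (of_real \<sigma> * of_real h ^ 2 / fact 2))) (at_right 0)"
    unfolding SS_def by (intro tendsto_intros ratio_lim[OF lb la nz])
  moreover have "- ((of_real \<sigma> * ((1 + of_real h)^2 - 3 * of_real h^2) / fact 2) / (of_real \<sigma> * of_real h ^ 2 / fact 2))
     = (of_real (chi 3 1 h) + of_real (chi 3 2 h) :: complex)"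
    unfolding of_real_add[symmetric] chi3[OF h] using s hc by (simp add: field_simps)
  ultimately have lS: "(SS \<longlongrightarrow> of_real (chi 3 1 h) + of_real (chi 3 2 h)) (at_right 0)" by simp
  have "(PP \<longlongrightarrow> (of_real \<sigma> * (of_real h - 1)^2 / fact 2) / (of_real \<sigma> * of_real h ^ 2 / fact 2)) (at_right 0)"
    unfolding PP_def by (rule ratio_lim[OF lc la nz])
  moreover have "(of_real \<sigma> * (of_real h - 1)^2 / fact 2) / (of_real \<sigma> * of_real h ^ 2 / fact 2)
     = (of_real (chi 3 1 h) * of_real (chi 3 2 h) :: complex)"
    unfolding of_real_mult[symmetric] chi3[OF h] using s hc by (simp add: field_simps)
  ultimately have lP: "(PP \<longlongrightarrow> of_real (chi 3 1 h) * of_real (chi 3 2 h)) (at_right 0)" by simp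
  obtain r1 r2 where rr: "\<And>z. r1 z + r2 z = SS z \<and> r1 z * r2 z = PP z"
    and l1: "(r1 \<longlongrightarrow> of_real (chi 3 1 h)) (at_right 0)" and l2: "(r2 \<longlongrightarrow> of_real (chi 3 2 h)) (at_right 0)"
    using quad_roots[OF lS lP] by blast
  define \<delta> where "\<delta> \<Delta> = \<theta>a \<Delta> / of_real (\<sigma> * (h * \<Delta>) ^ 2 / 2) - 1" for \<Delta>
  define \<eta> :: "nat \<Rightarrow> real \<Rightarrow> complex" where "\<eta> i \<Delta> = (if i = 1 then r1 \<Delta> else r2 \<Delta>) - of_real (chi 3 i h)" for i \<Delta>
  have "((\<lambda>\<Delta>. (\<theta>a \<Delta> / of_real \<Delta> ^ 2) / (of_real \<sigma> * of_real h ^ 2 / fact 2) - 1) \<longlongrightarrow> (of_real \<sigma> * of_real h ^ 2 / fact 2) / (of_real \<sigma> * of_real h ^ 2 / fact 2) - 1) (at_right 0)"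
    by (intro tendsto_intros la nz)
  hence "((\<lambda>\<Delta>. (\<theta>a \<Delta> / of_real \<Delta> ^ 2) / (of_real \<sigma> * of_real h ^ 2 / fact 2) - 1) \<longlongrightarrow> 0) (at_right 0)"
    using nz by simp
  moreover have "eventually (\<lambda>\<Delta>. (\<theta>a \<Delta> / of_real \<Delta> ^ 2) / (of_real \<sigma> * of_real h ^ 2 / fact 2) - 1 = \<delta> \<Delta>) (at_right 0)"
    using pos_ev by eventually_elim (simp add: \<delta>_def field_simps)
  ultimately have l\<delta>: "(\<delta> \<longlongrightarrow> 0) (at_right 0)" using tendsto_cong by fastforce
  have l\<eta>: "\<forall>i\<in>{1..3 - 0 - 1}. (\<eta> i \<longlongrightarrow> 0) (at_right 0)"
  proof
    fix i :: nat assume "i \<in> {1..3 - 0 - 1}"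
    hence "i = 1 \<or> i = 2" by auto
    thus "(\<eta> i \<longlongrightarrow> 0) (at_right 0)"
      unfolding \<eta>_def using to_zero[OF l1] to_zero[OF l2] by auto
  qed
  have ev: "eventually (\<lambda>\<Delta>. \<Delta> > 0 \<and> \<theta>a \<Delta> \<noteq> 0) (at_right 0)"
    using pos_ev ev_nz[OF la nz] by eventually_elim auto
  have main: "\<forall>\<^sub>F \<Delta> in at_right 0.
            \<theta>a \<Delta> = of_real (\<sigma> * (h * \<Delta>) ^ (3 - 0 - 1) / fact (3 - 0 - 1)) * (1 + \<delta> \<Delta>) \<and>
            (\<forall>dL. riemann_summable g \<Delta> h dL \<longrightarrow>
              (\<forall>n. poly_B (Phi_Delta lam 3 \<Delta>) (riemann_sum g \<Delta> h dL) n =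
                   poly_B (smult (\<theta>a \<Delta>)
                     ((\<Prod>i<0. [:1, - (1 - of_real \<Delta> * mu i + of_real \<Delta> * (\<lambda>_ _. 0) i \<Delta>):]) *
                      (\<Prod>i\<in>{1..3 - 0 - 1}. [:1, - (of_real (chi (3 - 0) i h) + \<eta> i \<Delta>):])))
                     (\<lambda>m. of_real (dL m)) n))"
    using ev
  proof eventually_elim
    case (elim \<Delta>)
    hence D: "\<Delta> > 0" and nz0: "\<theta>a \<Delta> \<noteq> 0" by auto
    have "\<theta>a \<Delta> = of_real (\<sigma> * (h * \<Delta>) ^ 2 / 2) * (1 + \<delta> \<Delta>)"
      using D s h by (simp add: \<delta>_def)
    moreover have u: "{1..3 - 0 - 1::nat} = {1, 2}" by auto
    have P: "smult (\<theta>a \<Delta>) ((\<Prod>i<0. [:1, - (1 - of_real \<Delta> * mu i + of_real \<Delta> * (\<lambda>_ _. 0) i \<Delta>):]) *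
                      (\<Prod>i\<in>{1..3 - 0 - 1}. [:1, - (of_real (chi (3 - 0) i h) + \<eta> i \<Delta>):]))
        = [:\<theta>a \<Delta>, \<theta>b \<Delta>, \<theta>c \<Delta>:]"
    proof -
      have "(\<Prod>i\<in>{1..3 - 0 - 1}. [:1, - (of_real (chi (3 - 0) i h) + \<eta> i \<Delta>):]) = [:1, - r1 \<Delta>:] * [:1, - r2 \<Delta>:]"
        unfolding u by (simp add: \<eta>_def)
      also have "\<dots> = [:1, - SS \<Delta>, PP \<Delta>:]" using rr[of \<Delta>] by (simp add: algebra_simps)
      finally show ?thesis using nz0 by (simp add: SS_def PP_def)
    qed
    have "poly_B (Phi_Delta lam 3 \<Delta>) (riemann_sum g \<Delta> h dL) n = poly_B [:\<theta>a \<Delta>, \<theta>b \<Delta>, \<theta>c \<Delta>:] (\<lambda>m. of_real (dL m)) n"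
      if "riemann_summable g \<Delta> h dL" for dL n
      unfolding poly_B3 \<theta>a_def \<theta>b_def \<theta>c_def using struct3[OF S(2) D h(1) that, of n] by simp
    ultimately show ?case unfolding P by simp
  qed
  show ?thesis unfolding concl_def g_def[symmetric]
    apply (rule exI[of _ \<theta>a], rule exI[of _ \<delta>], rule exI[of _ "\<lambda>_ _. 0"], rule exI[of _ \<eta>])
    using l\<delta> l\<eta> main by simp
qed



lemma case31:
  fixes \<sigma> h :: real and lam mu :: "nat \<Rightarrow> complex"
  assumes l: "lam 0 \<noteq> lam 1" "lam 0 \<noteq> lam 2" "lam 1 \<noteq> lam 2" and s: "\<sigma> > 0" and h: "0 < h" "h < 1"
  shows "concl 3 1 \<sigma> h lam mu (carma_kernel \<sigma> (carma_a lam 3) (carma_b mu 1))"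
proof -
  define g where "g = carma_kernel \<sigma> (carma_a lam 3) (carma_b mu 1)"
  define Dn where "Dn = (lam 0 - lam 1) * (lam 0 - lam 2) * (lam 1 - lam 2)"
  define x0 where "x0 = of_real \<sigma> * poly (carma_b mu 1) (lam 0) * (lam 1 - lam 2)"
  define x1 where "x1 = - (of_real \<sigma> * poly (carma_b mu 1) (lam 1) * (lam 0 - lam 2))"
  define x2 where "x2 = of_real \<sigma> * poly (carma_b mu 1) (lam 2) * (lam 0 - lam 1)"
  have S: "Dn \<noteq> 0"
    "\<And>t. t > 0 \<Longrightarrow> g t = (\<Sum>i<3. (if i = 0 then x0 / Dn else if i = 1 then x1 / Dn else x2 / Dn) * exp (lam i * of_real t))"
    "\<And>\<Delta>. \<Delta> > 0 \<Longrightarrow> g (\<Delta> * h) = es (scl Dn (G3 x0 x1 x2 lam (of_real h))) \<Delta>"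
    "\<And>\<Delta>. \<Delta> > 0 \<Longrightarrow> g (\<Delta> * (1 + h)) - (exp (of_real \<Delta> * lam 0) + exp (of_real \<Delta> * lam 1) + exp (of_real \<Delta> * lam 2)) * g (\<Delta> * h)
      = es (scl Dn (G3 x0 x1 x2 lam (1 + of_real h) @ lmul (Ph1 lam) (G3 x0 x1 x2 lam (of_real h)))) \<Delta>"
    "\<And>\<Delta>. \<Delta> > 0 \<Longrightarrow> g (\<Delta> * (2 + h)) - (exp (of_real \<Delta> * lam 0) + exp (of_real \<Delta> * lam 1) + exp (of_real \<Delta> * lam 2)) * g (\<Delta> * (1 + h))
      + (exp (of_real \<Delta> * lam 0) * exp (of_real \<Delta> * lam 1) + exp (of_real \<Delta> * lam 0) * exp (of_real \<Delta> * lam 2)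
         + exp (of_real \<Delta> * lam 1) * exp (of_real \<Delta> * lam 2)) * g (\<Delta> * h)
      = es (scl Dn (G3 x0 x1 x2 lam (2 + of_real h) @ lmul (Ph1 lam) (G3 x0 x1 x2 lam (1 + of_real h))
            @ lmul (Ph2 lam) (G3 x0 x1 x2 lam (of_real h)))) \<Delta>"
    unfolding g_def Dn_def x0_def x1_def x2_def by (rule setup3[OF l h(1)]; assumption)+
  have xs: "x0 = of_real \<sigma> * (mu 0 + lam 0) * (lam 1 - lam 2)" "x1 = - (of_real \<sigma> * (mu 0 + lam 1) * (lam 0 - lam 2))"
     "x2 = of_real \<sigma> * (mu 0 + lam 2) * (lam 0 - lam 1)"
    by (simp_all add: x0_def x1_def x2_def carma_b_def)
  define L where "L c = G3 x0 x1 x2 lam c" for c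
  note M = mom31[where s="of_real \<sigma>" and lam=lam and c="of_real h" and m="mu 0", folded xs, folded L_def Dn_def]
  define \<theta>a where "\<theta>a \<Delta> = g (\<Delta> * h)" for \<Delta>
  define \<theta>b where "\<theta>b \<Delta> = g (\<Delta> * (1 + h)) - (exp (of_real \<Delta> * lam 0) + exp (of_real \<Delta> * lam 1) + exp (of_real \<Delta> * lam 2)) * g (\<Delta> * h)" for \<Delta>
  define \<theta>c where "\<theta>c \<Delta> = g (\<Delta> * (2 + h)) - (exp (of_real \<Delta> * lam 0) + exp (of_real \<Delta> * lam 1) + exp (of_real \<Delta> * lam 2)) * g (\<Delta> * (1 + h))
      + (exp (of_real \<Delta> * lam 0) * exp (of_real \<Delta> * lam 1) + exp (of_real \<Delta> * lam 0) * exp (of_real \<Delta> * lam 2)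
         + exp (of_real \<Delta> * lam 1) * exp (of_real \<Delta> * lam 2)) * g (\<Delta> * h)" for \<Delta>
  have lt2: "n < 2 \<Longrightarrow> n = 0 \<or> n = 1" for n :: nat by auto
  have la: "((\<lambda>\<Delta>. \<theta>a \<Delta> / of_real \<Delta> ^ 1) \<longlongrightarrow> of_real \<sigma> * of_real h / fact 1) (at_right 0)"
    by (rule lim_num[OF S(3)[folded \<theta>a_def, unfolded L_def[symmetric]] S(1)])
       (use M lt2 in \<open>auto simp: L_def\<close>)
  have lb: "((\<lambda>\<Delta>. \<theta>b \<Delta> / of_real \<Delta> ^ 1) \<longlongrightarrow> of_real \<sigma> * (1 - 2 * of_real h) / fact 1) (at_right 0)"
    by (rule lim_num[OF S(4)[folded \<theta>a_def \<theta>b_def, unfolded L_def[symmetric]] S(1)])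
       (use M lt2 in \<open>auto simp: L_def\<close>)
  have lc: "((\<lambda>\<Delta>. \<theta>c \<Delta> / of_real \<Delta> ^ 1) \<longlongrightarrow> of_real \<sigma> * (of_real h - 1) / fact 1) (at_right 0)"
    by (rule lim_num[OF S(5)[folded \<theta>a_def \<theta>b_def \<theta>c_def, unfolded L_def[symmetric]] S(1)])
       (use M lt2 in \<open>auto simp: L_def\<close>)
  have eabc: "\<theta>a \<Delta> + \<theta>b \<Delta> + \<theta>c \<Delta> = es (scl Dn (L (of_real h) @ (L (1 + of_real h) @ lmul (Ph1 lam) (L (of_real h))) @
      (L (2 + of_real h) @ lmul (Ph1 lam) (L (1 + of_real h)) @ lmul (Ph2 lam) (L (of_real h))))) \<Delta>" if "\<Delta> > 0" for \<Delta>
    using S(3)[OF that] S(4)[OF that] S(5)[OF that] unfolding \<theta>a_def \<theta>b_def \<theta>c_def L_def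
    by (simp only: scl_append[symmetric] es_append add.assoc)
  have labc: "((\<lambda>\<Delta>. (\<theta>a \<Delta> + \<theta>b \<Delta> + \<theta>c \<Delta>) / of_real \<Delta> ^ 2) \<longlongrightarrow> 2 * of_real \<sigma> * mu 0 / fact 2) (at_right 0)"
    by (rule lim_num[OF eabc S(1)]) (use M lt2 in \<open>auto simp: L_def\<close>)
  have nz: "of_real \<sigma> * of_real h / fact 1 \<noteq> (0::complex)" using s h by simp
  define SS where "SS \<Delta> = - (\<theta>b \<Delta> / \<theta>a \<Delta>)" for \<Delta>
  define PP where "PP \<Delta> = \<theta>c \<Delta> / \<theta>a \<Delta>" for \<Delta>
  have hc: "(of_real h :: complex) \<noteq> 0" using h by simp
  have chi: "(of_real (chi 2 1 h) :: complex) = (of_real h - 1) / of_real h" by (simp add: chi_def)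
  have "(SS \<longlongrightarrow> - ((of_real \<sigma> * (1 - 2 * of_real h) / fact 1) / (of_real \<sigma> * of_real h / fact 1))) (at_right 0)"
    unfolding SS_def by (intro tendsto_intros ratio_lim[OF lb la nz])
  moreover have "- ((of_real \<sigma> * (1 - 2 * of_real h) / fact 1) / (of_real \<sigma> * of_real h / fact 1))
     = (1 + of_real (chi 2 1 h) :: complex)"
    unfolding chi using s hc by (simp add: field_simps)
  ultimately have lS: "(SS \<longlongrightarrow> 1 + of_real (chi 2 1 h)) (at_right 0)" by simp
  have "(PP \<longlongrightarrow> (of_real \<sigma> * (of_real h - 1) / fact 1) / (of_real \<sigma> * of_real h / fact 1)) (at_right 0)"
    unfolding PP_def by (rule ratio_lim[OF lc la nz])
  moreover have "(of_real \<sigma> * (of_real h - 1) / fact 1) / (of_real \<sigma> * of_real h / fact 1)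
     = (1 * of_real (chi 2 1 h) :: complex)"
    unfolding chi using s hc by (simp add: field_simps)
  ultimately have lP: "(PP \<longlongrightarrow> 1 * of_real (chi 2 1 h)) (at_right 0)" by simp
  obtain r1 r2 where rr: "\<And>z. r1 z + r2 z = SS z \<and> r1 z * r2 z = PP z"
    and l1: "(r1 \<longlongrightarrow> 1) (at_right 0)" and l2: "(r2 \<longlongrightarrow> of_real (chi 2 1 h)) (at_right 0)"
    using quad_roots[OF lS lP] by blast
  have c1: "1 - (of_real (chi 2 1 h) :: complex) = 1 / of_real h" unfolding chi using hc by (simp add: field_simps)
  have "((\<lambda>\<Delta>. 1 - r2 \<Delta>) \<longlongrightarrow> 1 - of_real (chi 2 1 h)) (at_right 0)" by (intro tendsto_intros l2)
  hence l2': "((\<lambda>\<Delta>. 1 - r2 \<Delta>) \<longlongrightarrow> 1 / of_real h) (at_right 0)" unfolding c1 .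
  have ev2: "eventually (\<lambda>\<Delta>. 1 - r2 \<Delta> \<noteq> 0) (at_right 0)"
    using tendsto_imp_eventually_ne[OF l2', of 0] hc by simp
  define y where "y \<Delta> = (r1 \<Delta> - 1) / of_real \<Delta>" for \<Delta>
  define \<epsilon> :: "nat \<Rightarrow> real \<Rightarrow> complex" where "\<epsilon> i \<Delta> = y \<Delta> + mu 0" for i \<Delta>
  have ev: "eventually (\<lambda>\<Delta>. \<Delta> > 0 \<and> \<theta>a \<Delta> \<noteq> 0 \<and> 1 - r2 \<Delta> \<noteq> 0) (at_right 0)"
    using pos_ev ev_nz[OF la nz] ev2 by eventually_elim auto
  have "((\<lambda>\<Delta>. - (((\<theta>a \<Delta> + \<theta>b \<Delta> + \<theta>c \<Delta>) / of_real \<Delta> ^ 2) / ((\<theta>a \<Delta> / of_real \<Delta> ^ 1) * (1 - r2 \<Delta>))))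
      \<longlongrightarrow> - ((2 * of_real \<sigma> * mu 0 / fact 2) / ((of_real \<sigma> * of_real h / fact 1) * (1 / of_real h)))) (at_right 0)"
    using nz hc by (intro tendsto_intros labc la l2') auto
  moreover have "- ((2 * of_real \<sigma> * mu 0 / fact 2) / ((of_real \<sigma> * of_real h / fact 1) * (1 / of_real h))) = - mu 0"
    using s hc by (simp add: field_simps)
  moreover have "eventually (\<lambda>\<Delta>. - (((\<theta>a \<Delta> + \<theta>b \<Delta> + \<theta>c \<Delta>) / of_real \<Delta> ^ 2) / ((\<theta>a \<Delta> / of_real \<Delta> ^ 1) * (1 - r2 \<Delta>))) = y \<Delta>) (at_right 0)"
    using ev
  proof eventually_elim
    case (elim \<Delta>)
    hence D: "\<Delta> > 0" and n1: "\<theta>a \<Delta> \<noteq> 0" and n2: "1 - r2 \<Delta> \<noteq> 0" by auto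
    have "(1 - r1 \<Delta>) * (1 - r2 \<Delta>) = 1 - SS \<Delta> + PP \<Delta>" using rr[of \<Delta>] by (simp add: algebra_simps)
    also have "\<dots> = (\<theta>a \<Delta> + \<theta>b \<Delta> + \<theta>c \<Delta>) / \<theta>a \<Delta>" using n1 by (simp add: SS_def PP_def field_simps)
    finally have "(1 - r1 \<Delta>) * (1 - r2 \<Delta>) = (\<theta>a \<Delta> + \<theta>b \<Delta> + \<theta>c \<Delta>) / \<theta>a \<Delta>" .
    thus ?case using D n1 n2 unfolding y_def by (simp add: field_simps power2_eq_square)
  qed
  ultimately have ly: "(y \<longlongrightarrow> - mu 0) (at_right 0)" using tendsto_cong by fastforce
  have l\<epsilon>: "(\<epsilon> i \<longlongrightarrow> 0) (at_right 0)" for i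
    unfolding \<epsilon>_def using tendsto_add[OF ly tendsto_const, of "mu 0"] by simp
  define \<delta> where "\<delta> \<Delta> = \<theta>a \<Delta> / of_real (\<sigma> * (h * \<Delta>)) - 1" for \<Delta>
  define \<eta> :: "nat \<Rightarrow> real \<Rightarrow> complex" where "\<eta> i \<Delta> = r2 \<Delta> - of_real (chi 2 1 h)" for i \<Delta>
  have "((\<lambda>\<Delta>. (\<theta>a \<Delta> / of_real \<Delta> ^ 1) / (of_real \<sigma> * of_real h / fact 1) - 1) \<longlongrightarrow> (of_real \<sigma> * of_real h / fact 1) / (of_real \<sigma> * of_real h / fact 1) - 1) (at_right 0)"
    by (intro tendsto_intros la nz)
  hence "((\<lambda>\<Delta>. (\<theta>a \<Delta> / of_real \<Delta> ^ 1) / (of_real \<sigma> * of_real h / fact 1) - 1) \<longlongrightarrow> 0) (at_right 0)"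
    using nz by simp
  moreover have "eventually (\<lambda>\<Delta>. (\<theta>a \<Delta> / of_real \<Delta> ^ 1) / (of_real \<sigma> * of_real h / fact 1) - 1 = \<delta> \<Delta>) (at_right 0)"
    using pos_ev by eventually_elim (simp add: \<delta>_def field_simps)
  ultimately have l\<delta>: "(\<delta> \<longlongrightarrow> 0) (at_right 0)" using tendsto_cong by fastforce
  have l\<eta>: "(\<eta> i \<longlongrightarrow> 0) (at_right 0)" for i
    unfolding \<eta>_def using to_zero[OF l2] by auto
  have main: "\<forall>\<^sub>F \<Delta> in at_right 0.
            \<theta>a \<Delta> = of_real (\<sigma> * (h * \<Delta>) ^ (3 - 1 - 1) / fact (3 - 1 - 1)) * (1 + \<delta> \<Delta>) \<and>
            (\<forall>dL. riemann_summable g \<Delta> h dL \<longrightarrow>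
              (\<forall>n. poly_B (Phi_Delta lam 3 \<Delta>) (riemann_sum g \<Delta> h dL) n =
                   poly_B (smult (\<theta>a \<Delta>)
                     ((\<Prod>i<1. [:1, - (1 - of_real \<Delta> * mu i + of_real \<Delta> * \<epsilon> i \<Delta>):]) *
                      (\<Prod>i\<in>{1..3 - 1 - 1}. [:1, - (of_real (chi (3 - 1) i h) + \<eta> i \<Delta>):])))
                     (\<lambda>m. of_real (dL m)) n))"
    using ev
  proof eventually_elim
    case (elim \<Delta>)
    hence D: "\<Delta> > 0" and nz0: "\<theta>a \<Delta> \<noteq> 0" by auto
    have "\<theta>a \<Delta> = of_real (\<sigma> * (h * \<Delta>)) * (1 + \<delta> \<Delta>)"
      using D s h by (simp add: \<delta>_def)
    moreover have P: "smult (\<theta>a \<Delta>) ((\<Prod>i<1. [:1, - (1 - of_real \<Delta> * mu i + of_real \<Delta> * \<epsilon> i \<Delta>):]) *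
                      (\<Prod>i\<in>{1..3 - 1 - 1}. [:1, - (of_real (chi (3 - 1) i h) + \<eta> i \<Delta>):]))
        = [:\<theta>a \<Delta>, \<theta>b \<Delta>, \<theta>c \<Delta>:]"
    proof -
      have "1 - of_real \<Delta> * mu 0 + of_real \<Delta> * \<epsilon> 0 \<Delta> = r1 \<Delta>"
        using D by (simp add: \<epsilon>_def y_def field_simps)
      hence "(\<Prod>i<1. [:1, - (1 - of_real \<Delta> * mu i + of_real \<Delta> * \<epsilon> i \<Delta>):]) *
                      (\<Prod>i\<in>{1..3 - 1 - 1}. [:1, - (of_real (chi (3 - 1) i h) + \<eta> i \<Delta>):]) = [:1, - r1 \<Delta>:] * [:1, - r2 \<Delta>:]"
        by (simp add: \<eta>_def)
      also have "\<dots> = [:1, - SS \<Delta>, PP \<Delta>:]" using rr[of \<Delta>] by (simp add: algebra_simps)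
      finally show ?thesis using nz0 by (simp add: SS_def PP_def)
    qed
    moreover have "poly_B (Phi_Delta lam 3 \<Delta>) (riemann_sum g \<Delta> h dL) n = poly_B [:\<theta>a \<Delta>, \<theta>b \<Delta>, \<theta>c \<Delta>:] (\<lambda>m. of_real (dL m)) n"
      if "riemann_summable g \<Delta> h dL" for dL n
      unfolding poly_B3 \<theta>a_def \<theta>b_def \<theta>c_def using struct3[OF S(2) D h(1) that, of n] by simp
    ultimately show ?case by simp
  qed
  show ?thesis unfolding concl_def g_def[symmetric]
    apply (rule exI[of _ \<theta>a], rule exI[of _ \<delta>], rule exI[of _ \<epsilon>], rule exI[of _ \<eta>])
    using l\<delta> l\<eta> l\<epsilon> main by simp
qed



lemma case32:
  fixes \<sigma> h :: real and lam mu :: "nat \<Rightarrow> complex"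
  assumes l: "lam 0 \<noteq> lam 1" "lam 0 \<noteq> lam 2" "lam 1 \<noteq> lam 2" and s: "\<sigma> > 0" and h: "0 < h" "h < 1"
  shows "concl 3 2 \<sigma> h lam mu (carma_kernel \<sigma> (carma_a lam 3) (carma_b mu 2))"
proof -
  define g where "g = carma_kernel \<sigma> (carma_a lam 3) (carma_b mu 2)"
  define Dn where "Dn = (lam 0 - lam 1) * (lam 0 - lam 2) * (lam 1 - lam 2)"
  define x0 where "x0 = of_real \<sigma> * poly (carma_b mu 2) (lam 0) * (lam 1 - lam 2)"
  define x1 where "x1 = - (of_real \<sigma> * poly (carma_b mu 2) (lam 1) * (lam 0 - lam 2))"
  define x2 where "x2 = of_real \<sigma> * poly (carma_b mu 2) (lam 2) * (lam 0 - lam 1)"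
  have S: "Dn \<noteq> 0"
    "\<And>t. t > 0 \<Longrightarrow> g t = (\<Sum>i<3. (if i = 0 then x0 / Dn else if i = 1 then x1 / Dn else x2 / Dn) * exp (lam i * of_real t))"
    "\<And>\<Delta>. \<Delta> > 0 \<Longrightarrow> g (\<Delta> * h) = es (scl Dn (G3 x0 x1 x2 lam (of_real h))) \<Delta>"
    "\<And>\<Delta>. \<Delta> > 0 \<Longrightarrow> g (\<Delta> * (1 + h)) - (exp (of_real \<Delta> * lam 0) + exp (of_real \<Delta> * lam 1) + exp (of_real \<Delta> * lam 2)) * g (\<Delta> * h)
      = es (scl Dn (G3 x0 x1 x2 lam (1 + of_real h) @ lmul (Ph1 lam) (G3 x0 x1 x2 lam (of_real h)))) \<Delta>"
    "\<And>\<Delta>. \<Delta> > 0 \<Longrightarrow> g (\<Delta> * (2 + h)) - (exp (of_real \<Delta> * lam 0) + exp (of_real \<Delta> * lam 1) + exp (of_real \<Delta> * lam 2)) * g (\<Delta> * (1 + h))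
      + (exp (of_real \<Delta> * lam 0) * exp (of_real \<Delta> * lam 1) + exp (of_real \<Delta> * lam 0) * exp (of_real \<Delta> * lam 2)
         + exp (of_real \<Delta> * lam 1) * exp (of_real \<Delta> * lam 2)) * g (\<Delta> * h)
      = es (scl Dn (G3 x0 x1 x2 lam (2 + of_real h) @ lmul (Ph1 lam) (G3 x0 x1 x2 lam (1 + of_real h))
            @ lmul (Ph2 lam) (G3 x0 x1 x2 lam (of_real h)))) \<Delta>"
    unfolding g_def Dn_def x0_def x1_def x2_def by (rule setup3[OF l h(1)]; assumption)+
  have pb: "poly (carma_b mu 2) z = (mu 0 + z) * (mu 1 + z)" for z
    by (simp add: carma_b_def numeral_2_eq_2 lessThan_Suc poly_prod algebra_simps)
  have xs: "x0 = of_real \<sigma> * ((mu 0 + lam 0) * (mu 1 + lam 0)) * (lam 1 - lam 2)"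
     "x1 = - (of_real \<sigma> * ((mu 0 + lam 1) * (mu 1 + lam 1)) * (lam 0 - lam 2))"
     "x2 = of_real \<sigma> * ((mu 0 + lam 2) * (mu 1 + lam 2)) * (lam 0 - lam 1)"
    by (simp_all add: x0_def x1_def x2_def pb)
  define L where "L c = G3 x0 x1 x2 lam c" for c
  note M = mom32[where s="of_real \<sigma>" and lam=lam and c="of_real h" and ma="mu 0" and mb="mu 1", folded xs, folded L_def Dn_def]
  define \<theta>a where "\<theta>a \<Delta> = g (\<Delta> * h)" for \<Delta>
  define \<theta>b where "\<theta>b \<Delta> = g (\<Delta> * (1 + h)) - (exp (of_real \<Delta> * lam 0) + exp (of_real \<Delta> * lam 1) + exp (of_real \<Delta> * lam 2)) * g (\<Delta> * h)" for \<Delta>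
  define \<theta>c where "\<theta>c \<Delta> = g (\<Delta> * (2 + h)) - (exp (of_real \<Delta> * lam 0) + exp (of_real \<Delta> * lam 1) + exp (of_real \<Delta> * lam 2)) * g (\<Delta> * (1 + h))
      + (exp (of_real \<Delta> * lam 0) * exp (of_real \<Delta> * lam 1) + exp (of_real \<Delta> * lam 0) * exp (of_real \<Delta> * lam 2)
         + exp (of_real \<Delta> * lam 1) * exp (of_real \<Delta> * lam 2)) * g (\<Delta> * h)" for \<Delta>
  have lt2: "n < 2 \<Longrightarrow> n = 0 \<or> n = 1" for n :: nat by auto
  have la: "((\<lambda>\<Delta>. \<theta>a \<Delta> / of_real \<Delta> ^ 0) \<longlongrightarrow> of_real \<sigma> / fact 0) (at_right 0)"
    by (rule lim_num[OF S(3)[folded \<theta>a_def, unfolded L_def[symmetric]] S(1)])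
       (use M lt2 in \<open>auto simp: L_def\<close>)
  hence la': "(\<theta>a \<longlongrightarrow> of_real \<sigma>) (at_right 0)" by simp
  have eabc: "\<theta>a \<Delta> + \<theta>b \<Delta> + \<theta>c \<Delta> = es (scl Dn (L (of_real h) @ (L (1 + of_real h) @ lmul (Ph1 lam) (L (of_real h))) @
      (L (2 + of_real h) @ lmul (Ph1 lam) (L (1 + of_real h)) @ lmul (Ph2 lam) (L (of_real h))))) \<Delta>" if "\<Delta> > 0" for \<Delta>
    using S(3)[OF that] S(4)[OF that] S(5)[OF that] unfolding \<theta>a_def \<theta>b_def \<theta>c_def L_def
    by (simp only: scl_append[symmetric] es_append add.assoc)
  have labc: "((\<lambda>\<Delta>. (\<theta>a \<Delta> + \<theta>b \<Delta> + \<theta>c \<Delta>) / of_real \<Delta> ^ 2) \<longlongrightarrow> 2 * of_real \<sigma> * mu 0 * mu 1 / fact 2) (at_right 0)"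
    by (rule lim_num[OF eabc S(1)]) (use M lt2 in \<open>auto simp: L_def\<close>)
  have eab: "\<theta>a \<Delta> + \<theta>a \<Delta> + \<theta>b \<Delta> = es (scl Dn (L (of_real h) @ L (of_real h) @ (L (1 + of_real h) @ lmul (Ph1 lam) (L (of_real h))))) \<Delta>" if "\<Delta> > 0" for \<Delta>
    using S(3)[OF that] S(4)[OF that] unfolding \<theta>a_def \<theta>b_def L_def
    by (simp only: scl_append[symmetric] es_append add.assoc)
  have lab: "((\<lambda>\<Delta>. (\<theta>a \<Delta> + \<theta>a \<Delta> + \<theta>b \<Delta>) / of_real \<Delta> ^ 1) \<longlongrightarrow> of_real \<sigma> * (mu 0 + mu 1) / fact 1) (at_right 0)"
    by (rule lim_num[OF eab S(1)]) (use M lt2 in \<open>auto simp: L_def\<close>)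
  have nz: "of_real \<sigma> / fact 0 \<noteq> (0::complex)" using s by simp
  have nz': "(of_real \<sigma> :: complex) \<noteq> 0" using s by simp
  define YS where "YS \<Delta> = - (((\<theta>a \<Delta> + \<theta>a \<Delta> + \<theta>b \<Delta>) / of_real \<Delta> ^ 1) / \<theta>a \<Delta>)" for \<Delta>
  define YP where "YP \<Delta> = ((\<theta>a \<Delta> + \<theta>b \<Delta> + \<theta>c \<Delta>) / of_real \<Delta> ^ 2) / \<theta>a \<Delta>" for \<Delta>
  have "(YS \<longlongrightarrow> - ((of_real \<sigma> * (mu 0 + mu 1) / fact 1) / of_real \<sigma>)) (at_right 0)"
    unfolding YS_def by (intro tendsto_intros lab la' nz')
  moreover have "- ((of_real \<sigma> * (mu 0 + mu 1) / fact 1) / of_real \<sigma>) = - mu 0 + - mu 1"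
    using nz' by (simp add: field_simps)
  ultimately have lS: "(YS \<longlongrightarrow> - mu 0 + - mu 1) (at_right 0)" by simp
  have "(YP \<longlongrightarrow> (2 * of_real \<sigma> * mu 0 * mu 1 / fact 2) / of_real \<sigma>) (at_right 0)"
    unfolding YP_def by (intro tendsto_intros labc la' nz')
  moreover have "(2 * of_real \<sigma> * mu 0 * mu 1 / fact 2) / of_real \<sigma> = - mu 0 * - mu 1"
    using nz' by (simp add: field_simps)
  ultimately have lP: "(YP \<longlongrightarrow> - mu 0 * - mu 1) (at_right 0)" by simp
  obtain y1 y2 where yy: "\<And>z. y1 z + y2 z = YS z \<and> y1 z * y2 z = YP z"
    and l1: "(y1 \<longlongrightarrow> - mu 0) (at_right 0)" and l2: "(y2 \<longlongrightarrow> - mu 1) (at_right 0)"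
    using quad_roots[OF lS lP] by blast
  define \<epsilon> :: "nat \<Rightarrow> real \<Rightarrow> complex" where "\<epsilon> i \<Delta> = (if i = 0 then y1 \<Delta> else y2 \<Delta>) + mu i" for i \<Delta>
  have l\<epsilon>: "\<forall>i<2. (\<epsilon> i \<longlongrightarrow> 0) (at_right 0)"
  proof (intro allI impI)
    fix i :: nat assume "i < 2"
    hence "i = 0 \<or> i = 1" by auto
    thus "(\<epsilon> i \<longlongrightarrow> 0) (at_right 0)"
      unfolding \<epsilon>_def using tendsto_add[OF l1 tendsto_const, of "mu 0"] tendsto_add[OF l2 tendsto_const, of "mu 1"] by auto
  qed
  define \<delta> where "\<delta> \<Delta> = \<theta>a \<Delta> / of_real \<sigma> - 1" for \<Delta>
  have "((\<lambda>\<Delta>. \<theta>a \<Delta> / of_real \<sigma> - 1) \<longlongrightarrow> of_real \<sigma> / of_real \<sigma> - 1) (at_right 0)"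
    by (intro tendsto_intros la' nz')
  hence l\<delta>: "(\<delta> \<longlongrightarrow> 0) (at_right 0)" using nz' unfolding \<delta>_def by simp
  have ev: "eventually (\<lambda>\<Delta>. \<Delta> > 0 \<and> \<theta>a \<Delta> \<noteq> 0) (at_right 0)"
    using pos_ev ev_nz[OF la nz] by eventually_elim auto
  have main: "\<forall>\<^sub>F \<Delta> in at_right 0.
            \<theta>a \<Delta> = of_real (\<sigma> * (h * \<Delta>) ^ (3 - 2 - 1) / fact (3 - 2 - 1)) * (1 + \<delta> \<Delta>) \<and>
            (\<forall>dL. riemann_summable g \<Delta> h dL \<longrightarrow>
              (\<forall>n. poly_B (Phi_Delta lam 3 \<Delta>) (riemann_sum g \<Delta> h dL) n =
                   poly_B (smult (\<theta>a \<Delta>)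
                     ((\<Prod>i<2. [:1, - (1 - of_real \<Delta> * mu i + of_real \<Delta> * \<epsilon> i \<Delta>):]) *
                      (\<Prod>i\<in>{1..3 - 2 - 1}. [:1, - (of_real (chi (3 - 2) i h) + (\<lambda>_ _. 0) i \<Delta>):])))
                     (\<lambda>m. of_real (dL m)) n))"
    using ev
  proof eventually_elim
    case (elim \<Delta>)
    hence D: "\<Delta> > 0" and nz0: "\<theta>a \<Delta> \<noteq> 0" by auto
    have Dc: "(of_real \<Delta> :: complex) \<noteq> 0" using D by simp
    have "\<theta>a \<Delta> = of_real \<sigma> * (1 + \<delta> \<Delta>)"
      using D s by (simp add: \<delta>_def)
    moreover have P: "smult (\<theta>a \<Delta>) ((\<Prod>i<2. [:1, - (1 - of_real \<Delta> * mu i + of_real \<Delta> * \<epsilon> i \<Delta>):]) *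
                      (\<Prod>i\<in>{1..3 - 2 - 1}. [:1, - (of_real (chi (3 - 2) i h) + (\<lambda>_ _. 0) i \<Delta>):]))
        = [:\<theta>a \<Delta>, \<theta>b \<Delta>, \<theta>c \<Delta>:]"
    proof -
      have "(\<Prod>i<2. [:1, - (1 - of_real \<Delta> * mu i + of_real \<Delta> * \<epsilon> i \<Delta>):]) *
                      (\<Prod>i\<in>{1..3 - 2 - 1}. [:1, - (of_real (chi (3 - 2) i h) + (\<lambda>_ _. 0) i \<Delta>):])
          = [:1, - (1 + of_real \<Delta> * y1 \<Delta>):] * [:1, - (1 + of_real \<Delta> * y2 \<Delta>):]"
        by (simp add: numeral_2_eq_2 lessThan_Suc \<epsilon>_def algebra_simps)
      also have "\<dots> = [:1, - (2 + of_real \<Delta> * YS \<Delta>), 1 + of_real \<Delta> * YS \<Delta> + of_real \<Delta> ^ 2 * YP \<Delta>:]"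
      proof -
        have ys: "YS \<Delta> = y1 \<Delta> + y2 \<Delta>" and yp: "YP \<Delta> = y1 \<Delta> * y2 \<Delta>" using yy[of \<Delta>] by auto
        show ?thesis unfolding ys yp by (simp add: algebra_simps power2_eq_square)
      qed
      finally show ?thesis using nz0 Dc by (simp add: YS_def YP_def field_simps power2_eq_square)
    qed
    moreover have "poly_B (Phi_Delta lam 3 \<Delta>) (riemann_sum g \<Delta> h dL) n = poly_B [:\<theta>a \<Delta>, \<theta>b \<Delta>, \<theta>c \<Delta>:] (\<lambda>m. of_real (dL m)) n"
      if "riemann_summable g \<Delta> h dL" for dL n
      unfolding poly_B3 \<theta>a_def \<theta>b_def \<theta>c_def using struct3[OF S(2) D h(1) that, of n] by simp
    ultimately show ?case by simp
  qed
  show ?thesis unfolding concl_def g_def[symmetric]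
    apply (rule exI[of _ \<theta>a], rule exI[of _ \<delta>], rule exI[of _ \<epsilon>], rule exI[of _ "\<lambda>_ _. 0"])
    using l\<delta> l\<epsilon> main by simp
qed



lemma part1:
  fixes \<sigma> h :: real and lam mu :: "nat \<Rightarrow> complex"
  assumes h: "0 < h"
  defines "g \<equiv> carma_kernel \<sigma> (carma_a lam 1) (carma_b mu 0)"
  shows "\<forall>\<Delta>>0. \<forall>dL. riemann_summable g \<Delta> h dL \<longrightarrow>
         (\<forall>n. riemann_sum g \<Delta> h dL n - exp (of_real \<Delta> * lam 0) * riemann_sum g \<Delta> h dL (n - 1)
              = of_real \<sigma> * exp (of_real (\<Delta> * h) * lam 0) * of_real (dL n))"
proof (intro allI impI)
  have inj: "inj_on lam {..<1}" by (auto simp: inj_on_def)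
  have gf: "g t = of_real \<sigma> * exp (lam 0 * of_real t)" if "t > 0" for t
    using kernel_formula[OF inj that, of \<sigma> "carma_b mu 0"] by (simp add: g_def carma_b_def)
  fix \<Delta> :: real and dL n assume D: "\<Delta> > 0" and summ: "riemann_summable g \<Delta> h dL"
  define f where "f j = g (\<Delta> * (real j + h)) * of_real (dL (n - int j))" for j
  define f' where "f' j = g (\<Delta> * (real j + h)) * of_real (dL (n - 1 - int j))" for j
  have sf: "summable f" using summ unfolding riemann_summable_def f_def by blast
  have sf': "summable f'" using summ unfolding riemann_summable_def f'_def by blast
  have fs: "f (Suc j) = exp (of_real \<Delta> * lam 0) * f' j" for j
  proof -
    have p1: "\<Delta> * (real (Suc j) + h) > 0" "\<Delta> * (real j + h) > 0" using D h by auto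
    have "lam 0 * of_real (\<Delta> * (real (Suc j) + h)) = of_real \<Delta> * lam 0 + lam 0 * of_real (\<Delta> * (real j + h))"
      by (simp add: algebra_simps)
    hence "g (\<Delta> * (real (Suc j) + h)) = exp (of_real \<Delta> * lam 0) * g (\<Delta> * (real j + h))"
      using gf[OF p1(1)] gf[OF p1(2)] by (simp add: exp_add)
    moreover have "n - int (Suc j) = n - 1 - int j" by simp
    ultimately show ?thesis unfolding f_def f'_def by (simp add: diff_diff_eq)
  qed
  have "riemann_sum g \<Delta> h dL n = f 0 + (\<Sum>j. f (Suc j))"
    using suminf_split_head[OF sf] unfolding riemann_sum_def f_def[symmetric] by simp
  also have "(\<Sum>j. f (Suc j)) = exp (of_real \<Delta> * lam 0) * riemann_sum g \<Delta> h dL (n - 1)"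
    unfolding fs riemann_sum_def f'_def[symmetric] by (rule suminf_mult[OF sf'])
  also have "f 0 = of_real \<sigma> * exp (of_real (\<Delta> * h) * lam 0) * of_real (dL n)"
    using gf[of "\<Delta> * h"] D h by (simp add: f_def mult.commute)
  finally show "riemann_sum g \<Delta> h dL n - exp (of_real \<Delta> * lam 0) * riemann_sum g \<Delta> h dL (n - 1)
              = of_real \<sigma> * exp (of_real (\<Delta> * h) * lam 0) * of_real (dL n)" by simp
qed

theorem proposition4p5:
  fixes p q :: nat and \<sigma> h :: real and lam mu :: "nat \<Rightarrow> complex"
  defines "g \<equiv> carma_kernel \<sigma> (carma_a lam p) (carma_b mu q)"
  assumes "q < p" and "p \<le> 3" and "\<sigma> > 0"
    and "\<forall>k. coeff (carma_a lam p) k \<in> \<real>"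
    and "\<forall>k. coeff (carma_b mu q) k \<in> \<real>"
    and "\<forall>i<p. \<forall>j<q. lam i \<noteq> - mu j"
    and "\<forall>i<p. Re (lam i) < 0"
    and "\<forall>k<q. Re (mu k) \<noteq> 0"
    and "inj_on lam {..<p}"
    and "0 < h" and "h \<le> 1"
  shows
   "(p = 1 \<longrightarrow>
      (\<forall>\<Delta>>0. \<forall>dL. riemann_summable g \<Delta> h dL \<longrightarrow>
         (\<forall>n. riemann_sum g \<Delta> h dL n - exp (of_real \<Delta> * lam 0) * riemann_sum g \<Delta> h dL (n - 1)
              = of_real \<sigma> * exp (of_real (\<Delta> * h) * lam 0) * of_real (dL n))))
  \<and> (p \<in> {2, 3} \<and> h < 1 \<longrightarrow>
      (\<exists>\<theta>0 :: real \<Rightarrow> complex. \<exists>\<delta> :: real \<Rightarrow> complex.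
       \<exists>\<epsilon> :: nat \<Rightarrow> real \<Rightarrow> complex. \<exists>\<eta> :: nat \<Rightarrow> real \<Rightarrow> complex.
         (\<delta> \<longlongrightarrow> 0) (at_right 0) \<and>
         (\<forall>i<q. (\<epsilon> i \<longlongrightarrow> 0) (at_right 0)) \<and>
         (\<forall>i\<in>{1..p - q - 1}. (\<eta> i \<longlongrightarrow> 0) (at_right 0)) \<and>
         (\<forall>\<^sub>F \<Delta> in at_right 0.
            \<theta>0 \<Delta> = of_real (\<sigma> * (h * \<Delta>) ^ (p - q - 1) / fact (p - q - 1)) * (1 + \<delta> \<Delta>) \<and>
            (\<forall>dL. riemann_summable g \<Delta> h dL \<longrightarrow>
              (\<forall>n. poly_B (Phi_Delta lam p \<Delta>) (riemann_sum g \<Delta> h dL) n =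
                   poly_B (smult (\<theta>0 \<Delta>)
                     ((\<Prod>i<q. [:1, - (1 - of_real \<Delta> * mu i + of_real \<Delta> * \<epsilon> i \<Delta>):]) *
                      (\<Prod>i\<in>{1..p - q - 1}. [:1, - (of_real (chi (p - q) i h) + \<eta> i \<Delta>):])))
                     (\<lambda>m. of_real (dL m)) n)))))"
proof (intro conjI impI)
  assume "p = 1"
  hence "q = 0" using assms(2) by simp
  with \<open>p = 1\<close> show "\<forall>\<Delta>>0. \<forall>dL. riemann_summable g \<Delta> h dL \<longrightarrow>
         (\<forall>n. riemann_sum g \<Delta> h dL n - exp (of_real \<Delta> * lam 0) * riemann_sum g \<Delta> h dL (n - 1)
              = of_real \<sigma> * exp (of_real (\<Delta> * h) * lam 0) * of_real (dL n))"
    unfolding g_def using part1[OF assms(11)] by simp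
next
  assume ph: "p \<in> {2, 3} \<and> h < 1"
  have h: "0 < h" "h < 1" using ph assms(11) by auto
  have inj: "inj_on lam {..<p}" by fact
  have "concl p q \<sigma> h lam mu g"
  proof (cases "p = 2")
    case True
    have l: "lam 0 \<noteq> lam 1" using inj_onD[OF inj, of 0 1] True by auto
    have "q = 0 \<or> q = 1" using assms(2) True by auto
    thus ?thesis
    proof
      assume "q = 0" thus ?thesis using case20[OF l assms(4) h] True by (simp add: g_def)
    next
      assume "q = 1" thus ?thesis using case21[OF l assms(4) h] True by (simp add: g_def)
    qed
  next
    case False
    hence p3: "p = 3" using ph by auto
    have l: "lam 0 \<noteq> lam 1" "lam 0 \<noteq> lam 2" "lam 1 \<noteq> lam 2"
      using inj_onD[OF inj, of 0 1] inj_onD[OF inj, of 0 2] inj_onD[OF inj, of 1 2] p3 by auto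
    have "q = 0 \<or> q = 1 \<or> q = 2" using assms(2) p3 by auto
    thus ?thesis
    proof (elim disjE)
      assume "q = 0" thus ?thesis using case30[OF l assms(4) h] p3 by (simp add: g_def)
    next
      assume "q = 1" thus ?thesis using case31[OF l assms(4) h] p3 by (simp add: g_def)
    next
      assume "q = 2" thus ?thesis using case32[OF l assms(4) h] p3 by (simp add: g_def)
    qed
  qed
  thus "\<exists>\<theta>0 :: real \<Rightarrow> complex. \<exists>\<delta> :: real \<Rightarrow> complex.
       \<exists>\<epsilon> :: nat \<Rightarrow> real \<Rightarrow> complex. \<exists>\<eta> :: nat \<Rightarrow> real \<Rightarrow> complex.
         (\<delta> \<longlongrightarrow> 0) (at_right 0) \<and>
         (\<forall>i<q. (\<epsilon> i \<longlongrightarrow> 0) (at_right 0)) \<and>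
         (\<forall>i\<in>{1..p - q - 1}. (\<eta> i \<longlongrightarrow> 0) (at_right 0)) \<and>
         (\<forall>\<^sub>F \<Delta> in at_right 0.
            \<theta>0 \<Delta> = of_real (\<sigma> * (h * \<Delta>) ^ (p - q - 1) / fact (p - q - 1)) * (1 + \<delta> \<Delta>) \<and>
            (\<forall>dL. riemann_summable g \<Delta> h dL \<longrightarrow>
              (\<forall>n. poly_B (Phi_Delta lam p \<Delta>) (riemann_sum g \<Delta> h dL) n =
                   poly_B (smult (\<theta>0 \<Delta>)
                     ((\<Prod>i<q. [:1, - (1 - of_real \<Delta> * mu i + of_real \<Delta> * \<epsilon> i \<Delta>):]) *
                      (\<Prod>i\<in>{1..p - q - 1}. [:1, - (of_real (chi (p - q) i h) + \<eta> i \<Delta>):])))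
                     (\<lambda>m. of_real (dL m)) n)))"
    unfolding concl_def .
qed


end
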